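(* Let $X$ be a finite, connected geometric simplicial complex with vertex set $V$, let $q\in[1,\infty)$, and let $f,g: X\to\mathbb{R}$ be functions each obtained from a function on $V$ by extending linearly over simplices. Let $p$ be a balanced probability distribution on $V$. Let $G^{SP}_f=(V,p,D_f)$ and $G^{SP}_g=(V,p,D_g)$ be the shortest-path measure network representations of the merge trees $T_f$, $T_g$. Then \[ d^{GW}_q(G^{SP}_f,G^{SP}_g) \leq \left(|V|^{2/q}+2\right)\|f-g\|_{L^q(p)}. \]
   Context: Merge tree: for $f: X\to\mathbb{R}$, declare $x\sim y$ if $f(x)=f(y)=a$ and $x,y$ lie in the same connected component of $f^{-1}(-\infty,a]$; the merge tree is $T_f = X/\!\sim$, with $f$ descending to $T_f$. Let $\pi_f:V\to T_f$ be the restricted quotient map. The LCA matrix $W_f(v,w)$ is the maximum value of $f$ along the unique geodesic path from $\pi_f(v)$ to $\pi_f(w)$ in $T_f$. The shortest-path matrix $D_f(v,w)$ is the length of the unique geodesic path from $\pi_f(v)$ to $\pi_f(w)$ in $T_f$, where each tree edge between adjacent points has length equal to the absolute difference of their $f$-values; equivalently $D_f(v,w)=2W_f(v,w)-f(v)-f(w)$. A probability distribution $p$ on $V$ is balanced if $p(u)p(v)\le p(w)$ for all $u,v,w\in V$. $\|h\|_{L^q(p)} = (\sum_{v\in V}|h(v)|^q p(v))^{1/q}$. For finite measure networks $G_i=(V_i,p_i,W_i)$, with $\mathcal{C}(p_1,p_2)$ the nonnegative matrices with row sums $p_1$ and column sums $p_2$, $d^{GW}_q(G_1,G_2) = \tfrac12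 \min_{C\in\mathcal{C}(p_1,p_2)} (\sum_{i,j,k,l} |W_1(i,k)-W_2(j,l)|^q C_{i,j}C_{k,l})^{1/q}$. *)

theory Defs
  imports "HOL-Analysis.Analysis"
begin

(* Geometric simplicial complex: a finite family K of simplices in a Euclidean
   space (library notion simplicial_complex).  Its underlying space is \<Union>K,
   its vertex set the 0-simplices. *)
definition cplx_vertices :: "'a::euclidean_space set set \<Rightarrow> 'a set" where
  "cplx_vertices K = {v. {v} \<in> K}"

definition pl_extension :: "'a::euclidean_space set set \<Rightarrow> ('a \<Rightarrow> real) \<Rightarrow> bool" where
  "pl_extension K f \<longleftrightarrow>
     (\<forall>S\<in>K. \<forall>u::'a \<Rightarrow> real.
        (\<forall>c\<in>{c. c extreme_point_of S}. 0 \<le> u c) \<and> (\<Sum>c\<in>{c. c extreme_point_of S}. u c) = 1 \<longrightarrow>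
        f (\<Sum>c\<in>{c. c extreme_point_of S}. u c *\<^sub>R c) = (\<Sum>c\<in>{c. c extreme_point_of S}. u c * f c))"

definition mt_rel :: "'a::euclidean_space set \<Rightarrow> ('a \<Rightarrow> real) \<Rightarrow> 'a \<Rightarrow> 'a \<Rightarrow> bool" where
  "mt_rel X f x y \<longleftrightarrow> x \<in> X \<and> y \<in> X \<and> f x = f y \<and>
     y \<in> connected_component_set {z \<in> X. f z \<le> f x} x"

definition mt_class :: "'a::euclidean_space set \<Rightarrow> ('a \<Rightarrow> real) \<Rightarrow> 'a \<Rightarrow> 'a set" where
  "mt_class X f x = {y. mt_rel X f x y}"

definition mt_points :: "'a::euclidean_space set \<Rightarrow> ('a \<Rightarrow> real) \<Rightarrow> 'a set set" where
  "mt_points X f = mt_class X f ` X"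

definition mt_topology :: "'a::euclidean_space set \<Rightarrow> ('a \<Rightarrow> real) \<Rightarrow> 'a set topology" where
  "mt_topology X f = topology (\<lambda>U. U \<subseteq> mt_points X f \<and>
      openin (top_of_set X) {x \<in> X. mt_class X f x \<in> U})"

definition mt_fun :: "('a \<Rightarrow> real) \<Rightarrow> 'a set \<Rightarrow> real" where
  "mt_fun f c = f (SOME x. x \<in> c)"

definition arc_in :: "'b topology \<Rightarrow> (real \<Rightarrow> 'b) \<Rightarrow> bool" where
  "arc_in T g \<longleftrightarrow> pathin T g \<and> inj_on g {0..1}"

definition mt_geodesic :: "'a::euclidean_space set \<Rightarrow> ('a \<Rightarrow> real) \<Rightarrow> 'a set \<Rightarrow> 'a set \<Rightarrow> 'a set set" where
  "mt_geodesic X f s t = (SOME \<Gamma>. (s = t \<and> \<Gamma> = {s}) \<or>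
      (s \<noteq> t \<and> (\<exists>g. arc_in (mt_topology X f) g \<and> g 0 = s \<and> g 1 = t \<and> \<Gamma> = g ` {0..1})))"

definition lca_matrix :: "'a::euclidean_space set \<Rightarrow> ('a \<Rightarrow> real) \<Rightarrow> 'a \<Rightarrow> 'a \<Rightarrow> real" where
  "lca_matrix X f v w =
     Sup (mt_fun f ` mt_geodesic X f (mt_class X f v) (mt_class X f w))"

definition sp_matrix :: "'a::euclidean_space set \<Rightarrow> ('a \<Rightarrow> real) \<Rightarrow> 'a \<Rightarrow> 'a \<Rightarrow> real" where
  "sp_matrix X f v w = 2 * lca_matrix X f v w - f v - f w"

definition prob_dist :: "'v set \<Rightarrow> ('v \<Rightarrow> real) \<Rightarrow> bool" where
  "prob_dist V p \<longleftrightarrow> (\<forall>v\<in>V. 0 \<le> p v) \<and> (\<Sum>v\<in>V. p v) = 1"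

definition balanced :: "'v set \<Rightarrow> ('v \<Rightarrow> real) \<Rightarrow> bool" where
  "balanced V p \<longleftrightarrow> (\<forall>u\<in>V. \<forall>v\<in>V. \<forall>w\<in>V. p u * p v \<le> p w)"

definition Lq_norm :: "real \<Rightarrow> 'v set \<Rightarrow> ('v \<Rightarrow> real) \<Rightarrow> ('v \<Rightarrow> real) \<Rightarrow> real" where
  "Lq_norm q V p h = (\<Sum>v\<in>V. \<bar>h v\<bar> powr q * p v) powr (1 / q)"

definition couplings :: "'v set \<Rightarrow> ('v \<Rightarrow> real) \<Rightarrow> 'w set \<Rightarrow> ('w \<Rightarrow> real) \<Rightarrow> ('v \<Rightarrow> 'w \<Rightarrow> real) set" where
  "couplings V1 p1 V2 p2 = {C. (\<forall>i\<in>V1. \<forall>j\<in>V2. 0 \<le> C i j) \<and>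
      (\<forall>i\<in>V1. (\<Sum>j\<in>V2. C i j) = p1 i) \<and> (\<forall>j\<in>V2. (\<Sum>i\<in>V1. C i j) = p2 j)}"

(* Gromov-Wasserstein q-distance between finite measure networks (V1,p1,W1), (V2,p2,W2);
   the minimum over the compact set of couplings is written as an infimum *)
definition gw_dist :: "real \<Rightarrow> 'v set \<Rightarrow> ('v \<Rightarrow> real) \<Rightarrow> ('v \<Rightarrow> 'v \<Rightarrow> real)
    \<Rightarrow> 'w set \<Rightarrow> ('w \<Rightarrow> real) \<Rightarrow> ('w \<Rightarrow> 'w \<Rightarrow> real) \<Rightarrow> real" where
  "gw_dist q V1 p1 W1 V2 p2 W2 = 1 / 2 * Inf ((\<lambda>C.
      (\<Sum>i\<in>V1. \<Sum>j\<in>V2. \<Sum>k\<in>V1. \<Sum>l\<in>V2. \<bar>W1 i k - W2 j l\<bar> powr q * C i j * C k l) powr (1 / q))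
      ` couplings V1 p1 V2 p2)"

end

theory Submission
  imports Defs
begin

lemma powr_convex2:
  fixes x y t q :: real
  assumes "x \<ge> 0" "y \<ge> 0" "0 \<le> t" "t \<le> 1" "q \<ge> 1"
  shows "(t * x + (1 - t) * y) powr q \<le> t * x powr q + (1 - t) * y powr q"
proof (cases "x > 0 \<and> y > 0")
  case True
  then show ?thesis using convex_onD[OF powr_convex[OF assms(5)], of "1-t" x y] assms by (auto simp: algebra_simps)
next
  case False
  have aux: "(s * z) powr q \<le> s * z powr q" if "0 \<le> s" "s \<le> 1" "z \<ge> 0" for s z
  proof -
    have "(s * z) powr q = s powr q * z powr q" using that by (simp add: powr_mult)
    also have "s powr q \<le> s" using that assms(5)
      by (metis order_le_less powr_le1 powr_one_gt_zero_iff powr_mono' less_eq_real_def powr_one_eq_one powr_zero_eq_one)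
    then have "s powr q * z powr q \<le> s * z powr q" by (simp add: mult_right_mono)
    finally show ?thesis .
  qed
  from False assms have "x = 0 \<or> y = 0" by auto
  then show ?thesis
  proof
    assume "x = 0" then show ?thesis using aux[of "1-t" y] assms by simp
  next
    assume "y = 0" then show ?thesis using aux[of t x] assms by simp
  qed
qed

lemma minkowski2:
  fixes a b w :: "'i \<Rightarrow> real" and q :: real
  assumes fin: "finite I" and w: "\<And>i. i \<in> I \<Longrightarrow> w i \<ge> 0"
    and a: "\<And>i. i \<in> I \<Longrightarrow> a i \<ge> 0" and b: "\<And>i. i \<in> I \<Longrightarrow> b i \<ge> 0" and q: "q \<ge> 1"
  shows "(\<Sum>i\<in>I. (a i + b i) powr q * w i) powr (1/q)
     \<le> (\<Sum>i\<in>I. a i powr q * w i) powr (1/q) + (\<Sum>i\<in>I. b i powr q * w i) powr (1/q)"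
proof -
  define SA where "SA = (\<Sum>i\<in>I. a i powr q * w i)"
  define SB where "SB = (\<Sum>i\<in>I. b i powr q * w i)"
  define A where "A = SA powr (1/q)"
  define B where "B = SB powr (1/q)"
  have SA0: "SA \<ge> 0" unfolding SA_def using w a by (auto intro!: sum_nonneg)
  have SB0: "SB \<ge> 0" unfolding SB_def using w b by (auto intro!: sum_nonneg)
  have A0: "A \<ge> 0" "B \<ge> 0" unfolding A_def B_def by auto
  have SAA: "SA = A powr q" unfolding A_def using SA0 q by (simp add: powr_powr)
  have SBB: "SB = B powr q" unfolding B_def using SB0 q by (simp add: powr_powr)
  show ?thesis
  proof (cases "A = 0 \<or> B = 0")
    case True
    then show ?thesis
    proof
      assume "A = 0"
      then have "SA = 0" using SAA q by simp
      then have z: "\<forall>i\<in>I. a i powr q * w i = 0"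
        using sum_nonneg_eq_0_iff[OF fin, of "\<lambda>i. a i powr q * w i"] w a unfolding SA_def by auto
      have "(\<Sum>i\<in>I. (a i + b i) powr q * w i) = SB"
        unfolding SB_def
      proof (rule sum.cong)
        fix i assume i: "i \<in> I"
        then have "a i = 0 \<or> w i = 0" using z by auto
        then show "(a i + b i) powr q * w i = b i powr q * w i" by auto
      qed simp
      then show ?thesis using \<open>SA = 0\<close> by (simp add: SA_def[symmetric] SB_def[symmetric])
    next
      assume "B = 0"
      then have "SB = 0" using SBB q by simp
      then have z: "\<forall>i\<in>I. b i powr q * w i = 0"
        using sum_nonneg_eq_0_iff[OF fin, of "\<lambda>i. b i powr q * w i"] w b unfolding SB_def by auto
      have "(\<Sum>i\<in>I. (a i + b i) powr q * w i) = SA"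
        unfolding SA_def
      proof (rule sum.cong)
        fix i assume i: "i \<in> I"
        then have "b i = 0 \<or> w i = 0" using z by auto
        then show "(a i + b i) powr q * w i = a i powr q * w i" by auto
      qed simp
      then show ?thesis using \<open>SB = 0\<close> by (simp add: SA_def[symmetric] SB_def[symmetric])
    qed
  next
    case False
    then have Ap: "A > 0" and Bp: "B > 0" using A0 by auto
    define t where "t = A / (A + B)"
    have t01: "0 < t" "t < 1" using Ap Bp unfolding t_def by (auto simp: field_simps)
    have 1: "1 - t = B / (A + B)" using Ap Bp unfolding t_def by (auto simp: field_simps)
    have pt: "(a i + b i) powr q \<le> t * (a i / t) powr q + (1 - t) * (b i / (1 - t)) powr q"
      if i: "i \<in> I" for i
    proof -
      have "a i + b i = t * (a i / t) + (1 - t) * (b i / (1 - t))" using t01 by auto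
      then show ?thesis using powr_convex2[of "a i / t" "b i / (1 - t)" t q] a[OF i] b[OF i] t01 q
        by auto
    qed
    have eqa: "t * (a i / t) powr q = t powr (1 - q) * a i powr q" if i: "i \<in> I" for i
    proof -
      have "t * (a i / t) powr q = t * (a i powr q / t powr q)" using a[OF i] t01 by (simp add: powr_divide)
      also have "\<dots> = (t powr 1 / t powr q) * a i powr q" using t01 by simp
      finally show ?thesis using t01 by (simp add: powr_diff)
    qed
    have eqb: "(1 - t) * (b i / (1 - t)) powr q = (1 - t) powr (1 - q) * b i powr q" if i: "i \<in> I" for i
    proof -
      have "(1 - t) * (b i / (1 - t)) powr q = (1 - t) * (b i powr q / (1 - t) powr q)" using b[OF i] t01 by (simp add: powr_divide)
      also have "\<dots> = ((1 - t) powr 1 / (1 - t) powr q) * b i powr q" using t01 by simp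
      finally show ?thesis using t01 by (simp add: powr_diff)
    qed
    have "(\<Sum>i\<in>I. (a i + b i) powr q * w i)
        \<le> (\<Sum>i\<in>I. (t powr (1 - q) * a i powr q + (1 - t) powr (1 - q) * b i powr q) * w i)"
      using pt eqa eqb w by (intro sum_mono mult_right_mono) auto
    also have "\<dots> = t powr (1 - q) * SA + (1 - t) powr (1 - q) * SB"
      unfolding SA_def SB_def by (simp add: sum.distrib sum_distrib_left algebra_simps)
    also have "t powr (1 - q) * SA = A * (A + B) powr (q - 1)"
    proof -
      have "t powr (1 - q) = A powr (1 - q) / (A + B) powr (1 - q)" unfolding t_def using Ap Bp by (simp add: powr_divide)
      also have "\<dots> = A powr (1 - q) * (A + B) powr (q - 1)" using Ap Bp by (simp add: divide_inverse) (metis minus_diff_eq powr_minus)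
      finally show ?thesis unfolding SAA using Ap by (simp add: powr_add[symmetric])
    qed
    also have "(1 - t) powr (1 - q) * SB = B * (A + B) powr (q - 1)"
    proof -
      have "(1 - t) powr (1 - q) = B powr (1 - q) / (A + B) powr (1 - q)" unfolding 1 using Ap Bp by (simp add: powr_divide)
      also have "\<dots> = B powr (1 - q) * (A + B) powr (q - 1)" using Ap Bp by (simp add: divide_inverse) (metis minus_diff_eq powr_minus)
      finally show ?thesis unfolding SBB using Bp by (simp add: powr_add[symmetric])
    qed
    also have "A * (A + B) powr (q - 1) + B * (A + B) powr (q - 1) = (A + B) powr q"
      using Ap Bp by (simp add: powr_diff add_divide_distrib[symmetric] distrib_right[symmetric])
    finally have le: "(\<Sum>i\<in>I. (a i + b i) powr q * w i) \<le> (A + B) powr q" .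
    have "(\<Sum>i\<in>I. (a i + b i) powr q * w i) powr (1/q) \<le> ((A + B) powr q) powr (1/q)"
      by (rule powr_mono2) (use le q a b w in \<open>auto intro!: sum_nonneg\<close>)
    also have "\<dots> = A + B" using Ap Bp q by (simp add: powr_powr)
    finally show ?thesis unfolding A_def B_def SA_def SB_def .
  qed
qed

lemma gw_bound:
  fixes V :: "'v set" and p :: "'v \<Rightarrow> real" and Da Db :: "'v \<Rightarrow> 'v \<Rightarrow> real"
    and h :: "'v \<Rightarrow> real" and q M :: real
  assumes fin: "finite V" and pd: "prob_dist V p" and bal: "balanced V p" and q: "q \<ge> 1"
    and hM: "\<And>u. u \<in> V \<Longrightarrow> \<bar>h u\<bar> \<le> M" and uz: "uz \<in> V" "\<bar>h uz\<bar> = M"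
    and D: "\<And>i k. i \<in> V \<Longrightarrow> k \<in> V \<Longrightarrow> \<bar>Da i k - Db i k\<bar> \<le> 2 * M + \<bar>h i\<bar> + \<bar>h k\<bar>"
  shows "gw_dist q V p Da V p Db \<le> (real (card V) powr (2 / q) + 2) * Lq_norm q V p h"
proof -
  have p0: "\<And>i. i \<in> V \<Longrightarrow> p i \<ge> 0" and p1: "(\<Sum>i\<in>V. p i) = 1" using pd by (auto simp: prob_dist_def)
  have M0: "M \<ge> 0" using uz by auto
  define C where "C = (\<lambda>i j. if i = j then p i else (0::real))"
  have Cc: "C \<in> couplings V p V p"
    unfolding couplings_def C_def using p0 fin by (auto simp: sum.delta sum.delta')
  define val where "val = (\<lambda>C. (\<Sum>i\<in>V. \<Sum>j\<in>V. \<Sum>k\<in>V. \<Sum>l\<in>V.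
        \<bar>Da i k - Db j l\<bar> powr q * C i j * C k l) powr (1 / q))"
  have bdd: "bdd_below (val ` couplings V p V p)"
    unfolding val_def by (rule bdd_belowI[of _ 0]) auto
  have "gw_dist q V p Da V p Db = 1/2 * Inf (val ` couplings V p V p)"
    unfolding gw_dist_def val_def ..
  also have "\<dots> \<le> 1/2 * val C"
    using cInf_lower[OF imageI[OF Cc] bdd] by simp
  also have "val C = (\<Sum>i\<in>V. \<Sum>k\<in>V. \<bar>Da i k - Db i k\<bar> powr q * (p i * p k)) powr (1 / q)"
  proof -
    have "(\<Sum>j\<in>V. \<Sum>k\<in>V. \<Sum>l\<in>V. \<bar>Da i k - Db j l\<bar> powr q * C i j * C k l)
        = (\<Sum>k\<in>V. \<bar>Da i k - Db i k\<bar> powr q * (p i * p k))" if i: "i \<in> V" for i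
    proof -
      have "(\<Sum>j\<in>V. \<Sum>k\<in>V. \<Sum>l\<in>V. \<bar>Da i k - Db j l\<bar> powr q * C i j * C k l)
          = (\<Sum>j\<in>V. if i = j then (\<Sum>k\<in>V. \<Sum>l\<in>V. \<bar>Da i k - Db i l\<bar> powr q * p i * C k l) else 0)"
        by (rule sum.cong) (auto simp: C_def)
      also have "\<dots> = (\<Sum>k\<in>V. \<Sum>l\<in>V. \<bar>Da i k - Db i l\<bar> powr q * p i * C k l)"
        using fin i by (simp add: sum.delta)
      also have "\<dots> = (\<Sum>k\<in>V. \<bar>Da i k - Db i k\<bar> powr q * (p i * p k))"
      proof (rule sum.cong)
        fix k assume k: "k \<in> V"
        have "(\<Sum>l\<in>V. \<bar>Da i k - Db i l\<bar> powr q * p i * C k l)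
            = (\<Sum>l\<in>V. if k = l then \<bar>Da i k - Db i k\<bar> powr q * p i * p k else 0)"
          by (rule sum.cong) (auto simp: C_def)
        also have "\<dots> = \<bar>Da i k - Db i k\<bar> powr q * (p i * p k)" using fin k by (simp add: sum.delta)
        finally show "(\<Sum>l\<in>V. \<bar>Da i k - Db i l\<bar> powr q * p i * C k l) = \<bar>Da i k - Db i k\<bar> powr q * (p i * p k)" .
      qed simp
      finally show ?thesis .
    qed
    then show ?thesis unfolding val_def by (simp cong: sum.cong)
  qed
  also have "(\<Sum>i\<in>V. \<Sum>k\<in>V. \<bar>Da i k - Db i k\<bar> powr q * (p i * p k))
      = (\<Sum>x\<in>V \<times> V. \<bar>Da (fst x) (snd x) - Db (fst x) (snd x)\<bar> powr q * (p (fst x) * p (snd x)))"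
    by (simp add: sum.cartesian_product case_prod_beta)
  finally have step1: "gw_dist q V p Da V p Db \<le> 1/2 * (\<Sum>x\<in>V \<times> V. \<bar>Da (fst x) (snd x) - Db (fst x) (snd x)\<bar> powr q * (p (fst x) * p (snd x))) powr (1/q)" .
  define w where "w = (\<lambda>x. p (fst x) * p (snd x))"
  have w0: "\<And>x. x \<in> V \<times> V \<Longrightarrow> w x \<ge> 0" unfolding w_def using p0 by auto
  have fin2: "finite (V \<times> V)" using fin by simp
  define N where "N = Lq_norm q V p h"
  have N0: "N \<ge> 0" unfolding N_def Lq_norm_def by simp
  have sw1: "(\<Sum>x\<in>V \<times> V. w x) = 1"
  proof -
    have "(\<Sum>x\<in>V \<times> V. w x) = (\<Sum>i\<in>V. \<Sum>k\<in>V. p i * p k)"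
      unfolding w_def by (simp add: sum.cartesian_product case_prod_beta)
    also have "\<dots> = 1" by (simp add: sum_distrib_left[symmetric] p1)
    finally show ?thesis .
  qed
  have sumw: "(\<Sum>x\<in>V \<times> V. c * w x) = c" for c
    by (simp add: sum_distrib_left[symmetric] sw1)
  have sumh1: "(\<Sum>x\<in>V \<times> V. \<bar>h (fst x)\<bar> powr q * w x) = (\<Sum>i\<in>V. \<bar>h i\<bar> powr q * p i)"
  proof -
    have "(\<Sum>x\<in>V \<times> V. \<bar>h (fst x)\<bar> powr q * w x) = (\<Sum>i\<in>V. \<Sum>k\<in>V. (\<bar>h i\<bar> powr q * p i) * p k)"
      unfolding w_def by (simp add: sum.cartesian_product case_prod_beta algebra_simps)
    also have "\<dots> = (\<Sum>i\<in>V. \<bar>h i\<bar> powr q * p i)"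
      by (simp add: sum_distrib_left[symmetric] p1)
    finally show ?thesis .
  qed
  have sumh2: "(\<Sum>x\<in>V \<times> V. \<bar>h (snd x)\<bar> powr q * w x) = (\<Sum>i\<in>V. \<bar>h i\<bar> powr q * p i)"
  proof -
    have "(\<Sum>x\<in>V \<times> V. \<bar>h (snd x)\<bar> powr q * w x) = (\<Sum>i\<in>V. \<Sum>k\<in>V. p i * (\<bar>h k\<bar> powr q * p k))"
      unfolding w_def by (simp add: sum.cartesian_product case_prod_beta algebra_simps)
    also have "\<dots> = (\<Sum>i\<in>V. \<bar>h i\<bar> powr q * p i)"
      by (simp add: sum_distrib_left[symmetric] sum_distrib_right[symmetric] p1)
    finally show ?thesis .
  qed
  have "(\<Sum>x\<in>V \<times> V. \<bar>Da (fst x) (snd x) - Db (fst x) (snd x)\<bar> powr q * w x) powr (1/q)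
      \<le> (\<Sum>x\<in>V \<times> V. (2 * M + (\<bar>h (fst x)\<bar> + \<bar>h (snd x)\<bar>)) powr q * w x) powr (1/q)"
    using q w0 D by (intro powr_mono2 sum_mono mult_right_mono powr_mono2 sum_nonneg) (auto simp: add.assoc)
  also have "\<dots> \<le> (\<Sum>x\<in>V \<times> V. (2 * M) powr q * w x) powr (1/q)
        + (\<Sum>x\<in>V \<times> V. (\<bar>h (fst x)\<bar> + \<bar>h (snd x)\<bar>) powr q * w x) powr (1/q)"
    by (rule minkowski2[OF fin2 w0 _ _ q]) (use M0 in auto)
  also have "(\<Sum>x\<in>V \<times> V. (\<bar>h (fst x)\<bar> + \<bar>h (snd x)\<bar>) powr q * w x) powr (1/q)
        \<le> (\<Sum>x\<in>V \<times> V. \<bar>h (fst x)\<bar> powr q * w x) powr (1/q) + (\<Sum>x\<in>V \<times> V. \<bar>h (snd x)\<bar> powr q * w x) powr (1/q)"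
    by (rule minkowski2[OF fin2 w0 _ _ q]) auto
  also have "(\<Sum>x\<in>V \<times> V. (2 * M) powr q * w x) powr (1/q) = 2 * M"
    using sumw M0 q by (simp add: powr_powr)
  also have "(\<Sum>x\<in>V \<times> V. \<bar>h (fst x)\<bar> powr q * w x) powr (1/q) = N"
    unfolding sumh1 N_def Lq_norm_def ..
  also have "(\<Sum>x\<in>V \<times> V. \<bar>h (snd x)\<bar> powr q * w x) powr (1/q) = N"
    unfolding sumh2 N_def Lq_norm_def ..
  finally have step2: "(\<Sum>x\<in>V \<times> V. \<bar>Da (fst x) (snd x) - Db (fst x) (snd x)\<bar> powr q * w x) powr (1/q) \<le> 2 * M + (N + N)" by simp
  have cardV: "card V > 0" using uz fin card_gt_0_iff by blast
  have pj: "\<exists>j\<in>V. p j \<ge> 1 / card V"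
  proof -
    define pm where "pm = Max (p ` V)"
    have "pm \<in> p ` V" unfolding pm_def using fin uz by (intro Max_in) auto
    then obtain j where j: "j \<in> V" "p j = pm" by auto
    have "\<And>i. i \<in> V \<Longrightarrow> p i \<le> p j" using j fin unfolding pm_def by auto
    then have "(\<Sum>i\<in>V. p i) \<le> card V * p j" by (rule sum_bounded_above)
    then have "1 \<le> card V * p j" using p1 by simp
    then have "p j \<ge> 1 / card V" using cardV by (simp add: field_simps)
    then show ?thesis using j by auto
  qed
  then obtain j where j: "j \<in> V" "p j \<ge> 1 / card V" by auto
  have puz: "p uz \<ge> 1 / (card V)^2"
  proof -
    have "p j * p j \<le> p uz" using bal j uz unfolding balanced_def by auto
    moreover have "(1 / card V) * (1 / card V) \<le> p j * p j"
      using j cardV p0 by (intro mult_mono) auto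
    ultimately show ?thesis by (simp add: power2_eq_square)
  qed
  have MN: "M \<le> real (card V) powr (2 / q) * N"
  proof -
    have "M powr q * p uz \<le> (\<Sum>i\<in>V. \<bar>h i\<bar> powr q * p i)"
      using member_le_sum[of uz V "\<lambda>i. \<bar>h i\<bar> powr q * p i"] uz p0 fin by auto
    also have "\<dots> = N powr q" unfolding N_def Lq_norm_def using q p0
      by (simp add: powr_powr sum_nonneg)
    finally have a: "M powr q * p uz \<le> N powr q" .
    have "M powr q = M powr q * (1 / (card V)^2) * (card V)^2" using cardV by simp
    also have "\<dots> \<le> M powr q * p uz * (card V)^2"
      using puz by (intro mult_right_mono mult_left_mono) auto
    also have "\<dots> \<le> N powr q * (card V)^2" using a by (intro mult_right_mono) auto
    finally have b: "M powr q \<le> N powr q * (card V)^2" .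
    have "M = (M powr q) powr (1/q)" using M0 q by (simp add: powr_powr)
    also have "\<dots> \<le> (N powr q * (card V)^2) powr (1/q)" using b q by (intro powr_mono2) auto
    also have "\<dots> = N * real (card V) powr (2 / q)"
    proof -
      have "((real (card V))^2) powr (1/q) = real (card V) powr (2/q)"
      proof -
        have e: "(real (card V))^2 = real (card V) powr 2" using cardV by (simp add: powr_numeral)
        show ?thesis unfolding e powr_powr by simp
      qed
      then show ?thesis using N0 q by (simp add: powr_mult powr_powr)
    qed
    finally show ?thesis by (simp add: mult.commute)
  qed
  have "gw_dist q V p Da V p Db \<le> 1/2 * (2 * M + (N + N))"
    using step1 step2 unfolding w_def by simp
  also have "\<dots> = M + N" by simp
  also have "\<dots> \<le> (real (card V) powr (2 / q) + 2) * N" using MN N0 by (simp add: algebra_simps)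
  finally show ?thesis unfolding N_def .
qed

lemma simplex_data:
  assumes "simplicial_complex K" "S \<in> K"
  obtains C where "finite C" "\<not> affine_dependent C" "S = convex hull C" "{c. c extreme_point_of S} = C"
proof -
  obtain n where "n simplex S" using assms unfolding simplicial_complex_def by blast
  then obtain C where C: "\<not> affine_dependent C" "S = convex hull C" unfolding simplex_def by blast
  have "finite C" using C aff_independent_finite by blast
  moreover have "{c. c extreme_point_of S} = C"
    using extreme_point_of_convex_hull_affine_independent[OF C(1)] C(2) by auto
  ultimately show ?thesis using that C by blast
qed

lemma pl_affine:
  fixes f :: "'a::euclidean_space \<Rightarrow> real"
  assumes K: "simplicial_complex K" and pl: "pl_extension K f" and S: "S \<in> K"
  obtains L where "continuous_on UNIV L" "\<And>x. x \<in> S \<Longrightarrow> f x = L x"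
    "\<And>x y u. L ((1-u) *\<^sub>R x + u *\<^sub>R y) = (1-u) * L x + u * L y"
proof -
  obtain C where C: "finite C" "\<not> affine_dependent C" "S = convex hull C" "{c. c extreme_point_of S} = C"
    using simplex_data[OF K S] by blast
  show ?thesis
  proof (cases "C = {}")
    case True
    then show ?thesis using that[of "\<lambda>_. 0"] C by auto
  next
    case False
    then obtain c0 where c0: "c0 \<in> C" by auto
    define B where "B = (\<lambda>x. -c0 + x) ` (C - {c0})"
    have "insert c0 (C - {c0}) = C" using c0 by auto
    then have "independent B"
      using affine_dependent_iff_dependent[of c0 "C - {c0}"] C(2) unfolding B_def by auto
    then obtain l where l: "linear l" "\<And>y. y \<in> B \<Longrightarrow> l y = f (y + c0) - f c0"
      using linear_independent_extend[of B "\<lambda>y. f (y + c0) - f c0"] by auto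
    define L where "L = (\<lambda>x. f c0 + l (x - c0))"
    have lc: "\<And>c. c \<in> C \<Longrightarrow> l (c - c0) = f c - f c0"
    proof -
      fix c assume c: "c \<in> C"
      show "l (c - c0) = f c - f c0"
      proof (cases "c = c0")
        case True then show ?thesis using linear_0[OF l(1)] by simp
      next
        case False
        then have "-c0 + c \<in> B" unfolding B_def using c by auto
        then show ?thesis using l(2)[of "-c0 + c"] by (simp add: algebra_simps)
      qed
    qed
    have cl: "continuous_on UNIV l" using l(1) linear_continuous_on linear_conv_bounded_linear by blast
    have "continuous_on UNIV (\<lambda>x. l (x - c0))"
      by (rule continuous_on_compose2[OF cl]) (auto intro!: continuous_intros)
    then have cont: "continuous_on UNIV L"
      unfolding L_def by (intro continuous_intros)
    have aff: "L ((1-u) *\<^sub>R x + u *\<^sub>R y) = (1-u) * L x + u * L y" for x y u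
    proof -
      have "(1-u) *\<^sub>R x + u *\<^sub>R y - c0 = (1-u) *\<^sub>R (x - c0) + u *\<^sub>R (y - c0)"
        by (simp add: algebra_simps)
      then have "l ((1-u) *\<^sub>R x + u *\<^sub>R y - c0) = (1-u) * l (x - c0) + u * l (y - c0)"
        using l(1) by (simp add: linear_add linear_cmul)
      then show ?thesis unfolding L_def by (simp add: algebra_simps)
    qed
    have eq: "f x = L x" if x: "x \<in> S" for x
    proof -
      obtain u where u: "\<forall>c\<in>C. 0 \<le> u c" "sum u C = 1" "(\<Sum>c\<in>C. u c *\<^sub>R c) = x"
        using x C(3) convex_hull_finite[OF C(1)] by auto
      have fx: "f x = (\<Sum>c\<in>C. u c * f c)"
        using pl[unfolded pl_extension_def, rule_format, OF S, of u] u unfolding C(4) by auto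
      have "x - c0 = (\<Sum>c\<in>C. u c *\<^sub>R (c - c0))"
        using u by (simp add: scaleR_diff_right sum_subtractf scaleR_sum_left[symmetric])
      then have "l (x - c0) = (\<Sum>c\<in>C. u c * l (c - c0))"
        using l(1) by (simp add: linear_sum linear_cmul)
      also have "\<dots> = (\<Sum>c\<in>C. u c * (f c - f c0))" using lc by simp
      also have "\<dots> = (\<Sum>c\<in>C. u c * f c) - f c0"
        using u by (simp add: right_diff_distrib sum_subtractf sum_distrib_right[symmetric])
      finally show ?thesis unfolding L_def fx by simp
    qed
    show ?thesis using that[OF cont eq aff] by blast
  qed
qed

lemma pl_vertex_bound:
  fixes f g :: "'a::euclidean_space \<Rightarrow> real"
  assumes K: "simplicial_complex K" and plf: "pl_extension K f" and plg: "pl_extension K g"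
    and M: "\<And>c. c \<in> cplx_vertices K \<Longrightarrow> \<bar>f c - g c\<bar> \<le> M" and x: "x \<in> \<Union>K"
  shows "\<bar>f x - g x\<bar> \<le> M"
proof -
  obtain S where S: "S \<in> K" "x \<in> S" using x by auto
  obtain C where C: "finite C" "\<not> affine_dependent C" "S = convex hull C" "{c. c extreme_point_of S} = C"
    using simplex_data[OF K S(1)] by blast
  obtain u where u: "\<forall>c\<in>C. 0 \<le> u c" "sum u C = 1" "(\<Sum>c\<in>C. u c *\<^sub>R c) = x"
    using S(2) C(3) convex_hull_finite[OF C(1)] by auto
  have fx: "f x = (\<Sum>c\<in>C. u c * f c)"
    using plf[unfolded pl_extension_def, rule_format, OF S(1), of u] u unfolding C(4) by auto
  have gx: "g x = (\<Sum>c\<in>C. u c * g c)"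
    using plg[unfolded pl_extension_def, rule_format, OF S(1), of u] u unfolding C(4) by auto
  have vert: "c \<in> cplx_vertices K" if "c \<in> C" for c
  proof -
    have "{c} face_of S" using that C(4) face_of_singleton by auto
    then show ?thesis using K S(1) unfolding simplicial_complex_def cplx_vertices_def by blast
  qed
  have "\<bar>f x - g x\<bar> = \<bar>\<Sum>c\<in>C. u c * (f c - g c)\<bar>"
    unfolding fx gx by (simp add: right_diff_distrib sum_subtractf)
  also have "\<dots> \<le> (\<Sum>c\<in>C. \<bar>u c * (f c - g c)\<bar>)" by (rule sum_abs)
  also have "\<dots> \<le> (\<Sum>c\<in>C. u c * M)"
    using u(1) M vert by (intro sum_mono) (auto simp: abs_mult intro: mult_left_mono)
  also have "\<dots> = M" using u(2) by (simp add: sum_distrib_right[symmetric])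
  finally show ?thesis .
qed

lemma sc_compact: "simplicial_complex K \<Longrightarrow> compact (\<Union>K)"
proof -
  assume K: "simplicial_complex K"
  have "compact S" if SK: "S \<in> K" for S
  proof -
    obtain C where C: "finite C" "S = convex hull C" using simplex_data[OF K SK] by metis
    then show ?thesis by (simp add: compact_convex_hull finite_imp_compact)
  qed
  moreover have "finite K" using K unfolding simplicial_complex_def by auto
  ultimately show ?thesis by (intro compact_Union) auto
qed

lemma sc_cont:
  assumes K: "simplicial_complex K" and pl: "pl_extension K f"
  shows "continuous_on (\<Union>K) f"
proof -
  have "continuous_on (\<Union>S\<in>K. S) f"
  proof (rule continuous_on_closed_Union)
    show "finite K" using K unfolding simplicial_complex_def by auto
  next
    fix S assume S: "S \<in> K"
    obtain C where C: "finite C" "S = convex hull C" using simplex_data[OF K S] by metis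
    then show "closed S" by (simp add: compact_convex_hull finite_imp_compact compact_imp_closed)
    obtain L where L: "continuous_on UNIV L" "\<And>x. x \<in> S \<Longrightarrow> f x = L x" using pl_affine[OF K pl S] by metis
    show "continuous_on S f"
      using continuous_on_subset[OF L(1)] L(2) continuous_on_cong by (metis subset_UNIV)
  qed
  then show ?thesis by simp
qed

lemma sc_comp_closed:
  fixes f :: "'a::euclidean_space \<Rightarrow> real"
  assumes K: "simplicial_complex K" and pl: "pl_extension K f"
  shows "closed ({y\<in>\<Union>K. f y \<le> b} - connected_component_set {y\<in>\<Union>K. f y \<le> b} x)"
proof -
  define Xb where "Xb = {y\<in>\<Union>K. f y \<le> b}"
  define A where "A = connected_component_set Xb x"
  define P where "P = (\<lambda>S. {y\<in>S. f y \<le> b})"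
  have Pcc: "closed (P S) \<and> connected (P S)" if S: "S \<in> K" for S
  proof -
    obtain C where C: "finite C" "S = convex hull C" using simplex_data[OF K S] by metis
    have cS: "closed S" "convex S" using C by (auto simp: compact_convex_hull finite_imp_compact compact_imp_closed)
    obtain L where L: "continuous_on UNIV L" "\<And>x. x \<in> S \<Longrightarrow> f x = L x"
      "\<And>x y u. L ((1-u) *\<^sub>R x + u *\<^sub>R y) = (1-u) * L x + u * L y"
      using pl_affine[OF K pl S] by metis
    have PL: "P S = S \<inter> {y. L y \<le> b}" unfolding P_def using L(2) by auto
    have "closed (P S)" unfolding PL
      using L(1) by (intro closed_Int cS closed_Collect_le) (auto intro: continuous_intros)
    moreover have "convex (P S)"
      unfolding PL convex_alt
    proof (intro ballI allI impI)
      fix y z :: 'a and u :: real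
      assume y: "y \<in> S \<inter> {y. L y \<le> b}" and z: "z \<in> S \<inter> {y. L y \<le> b}" and u: "0 \<le> u \<and> u \<le> 1"
      have "(1 - u) * L y + u * L z \<le> (1 - u) * b + u * b"
        using y z u by (intro add_mono mult_left_mono) auto
      then show "(1 - u) *\<^sub>R y + u *\<^sub>R z \<in> S \<inter> {y. L y \<le> b}"
        using y z u cS(2) L(3)[of u y z] by (auto simp: convex_alt algebra_simps)
    qed
    ultimately show ?thesis using convex_connected by blast
  qed
  have eq: "Xb - A = \<Union>{P S | S. S \<in> K \<and> P S \<inter> A = {}}"
  proof
    show "Xb - A \<subseteq> \<Union>{P S | S. S \<in> K \<and> P S \<inter> A = {}}"
    proof
      fix y assume y: "y \<in> Xb - A"
      then obtain S where S: "S \<in> K" "y \<in> S" unfolding Xb_def by auto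
      have yP: "y \<in> P S" using y S unfolding P_def Xb_def by auto
      have "P S \<inter> A = {}"
      proof (rule ccontr)
        assume "P S \<inter> A \<noteq> {}"
        then obtain z where z: "z \<in> P S" "z \<in> A" by auto
        have "P S \<subseteq> Xb" unfolding P_def Xb_def using S by auto
        then have "P S \<subseteq> connected_component_set Xb z"
          using connected_component_maximal[of z "P S" Xb] z Pcc[OF S(1)] by auto
        also have "\<dots> = A" unfolding A_def using z(2) connected_component_eq unfolding A_def by blast
        finally show False using yP y by auto
      qed
      then show "y \<in> \<Union>{P S | S. S \<in> K \<and> P S \<inter> A = {}}" using S yP by auto
    qed
  next
    show "\<Union>{P S | S. S \<in> K \<and> P S \<inter> A = {}} \<subseteq> Xb - A"
      unfolding P_def Xb_def by auto
  qed
  have "finite K" using K unfolding simplicial_complex_def by auto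
  then have "closed (\<Union>{P S | S. S \<in> K \<and> P S \<inter> A = {}})"
    using Pcc by (intro closed_Union) auto
  then show ?thesis using eq unfolding Xb_def A_def by simp
qed

definition mheight :: "'a::euclidean_space set \<Rightarrow> ('a \<Rightarrow> real) \<Rightarrow> 'a \<Rightarrow> 'a \<Rightarrow> real" where
  "mheight X f v w = Inf {b. w \<in> connected_component_set {y\<in>X. f y \<le> b} v}"

locale mtree =
  fixes X :: "'a::euclidean_space set" and f :: "'a \<Rightarrow> real"
  assumes cpt: "compact X" and conn: "connected X" and cont: "continuous_on X f"
    and compcl: "\<And>b x. closed ({y\<in>X. f y \<le> b} - connected_component_set {y\<in>X. f y \<le> b} x)"
begin

abbreviation "Xs b \<equiv> {y\<in>X. f y \<le> b}"
abbreviation "cc b x \<equiv> connected_component_set (Xs b) x"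
abbreviation "T \<equiv> mt_topology X f"
abbreviation "cls \<equiv> mt_class X f"
abbreviation "F \<equiv> mt_fun f"
abbreviation "mh \<equiv> mheight X f"

lemma Xs_closed: "closed (Xs b)"
proof -
  have "Xs b = X \<inter> f -` {..b}" by auto
  then show ?thesis using continuous_closed_preimage[OF cont compact_imp_closed[OF cpt]] by simp
qed

lemma cc_closed: "closed (cc b x)"
  by (rule closed_connected_component[OF Xs_closed])

lemma cc_compact: "compact (cc b x)"
proof -
  have "cc b x = X \<inter> cc b x" using connected_component_subset by blast
  then show ?thesis using compact_Int_closed[OF cpt cc_closed] by metis
qed

lemma cc_mono: "b \<le> b' \<Longrightarrow> cc b x \<subseteq> cc b' x"
  by (rule connected_component_mono) auto

lemma cc_sub: "y \<in> cc b x \<Longrightarrow> y \<in> X \<and> f y \<le> b"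
  using connected_component_subset by blast

lemma cc_base: "y \<in> cc b x \<Longrightarrow> x \<in> X \<and> f x \<le> b"
  by (metis (no_types, lifting) connected_component_eq_empty empty_iff mem_Collect_eq)

lemma cc_self: "x \<in> X \<Longrightarrow> f x \<le> b \<Longrightarrow> x \<in> cc b x"
  by (simp add: connected_component_refl)

lemma cc_eq: "y \<in> cc b x \<Longrightarrow> cc b y = cc b x"
  by (rule connected_component_eq)

lemma cc_symm: "y \<in> cc b x \<Longrightarrow> x \<in> cc b y"
  by (simp add: connected_component_sym)

lemma Xs_open_less: "openin (top_of_set X) {x\<in>X. f x < b}"
proof -
  have "{x\<in>X. f x < b} = X \<inter> f -` {..<b}" by auto
  then show ?thesis using continuous_openin_preimage_gen[OF cont, of "{..<b}"] by simp
qed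

lemma cc_rel_open: "openin (top_of_set X) {x\<in>X. f x < b \<and> x \<in> cc b v}"
proof -
  have e: "{x\<in>X. f x < b \<and> x \<in> cc b v} = {x\<in>X. f x < b} \<inter> (- (Xs b - cc b v))" by auto
  have op: "open (- (Xs b - cc b v))" using compcl[of b v] by (rule open_Compl)
  show ?thesis unfolding e by (rule openin_Int_open[OF Xs_open_less op])
qed

lemma rel_refl: "x \<in> X \<Longrightarrow> mt_rel X f x x"
  unfolding mt_rel_def by (simp add: connected_component_refl)

lemma rel_D: "mt_rel X f x y \<Longrightarrow> x \<in> X \<and> y \<in> X \<and> f y = f x \<and> y \<in> cc (f x) x"
  unfolding mt_rel_def by auto

lemma rel_sym: "mt_rel X f x y \<Longrightarrow> mt_rel X f y x"
  unfolding mt_rel_def by (auto simp: connected_component_sym)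

lemma rel_trans: assumes xy: "mt_rel X f x y" and yz: "mt_rel X f y z" shows "mt_rel X f x z"
proof -
  have a: "x \<in> X" "y \<in> X" "f y = f x" "y \<in> cc (f x) x" using rel_D[OF xy] by auto
  have b: "z \<in> X" "f z = f y" "z \<in> cc (f y) y" using rel_D[OF yz] by auto
  have "z \<in> cc (f x) x" using b(3) a(3) cc_eq[OF a(4)] by simp
  then show ?thesis unfolding mt_rel_def using a b by simp
qed

lemma cls_eq:
  assumes x: "x \<in> X" and y: "y \<in> X"
  shows "cls x = cls y \<longleftrightarrow> mt_rel X f x y"
proof
  assume e: "cls x = cls y"
  have "y \<in> cls y" unfolding mt_class_def using rel_refl[OF y] by simp
  then show "mt_rel X f x y" using e unfolding mt_class_def by (metis mem_Collect_eq)
next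
  assume r: "mt_rel X f x y"
  have "mt_rel X f x z \<longleftrightarrow> mt_rel X f y z" for z
  proof
    assume "mt_rel X f x z" then show "mt_rel X f y z" by (rule rel_trans[OF rel_sym[OF r]])
  next
    assume "mt_rel X f y z" then show "mt_rel X f x z" by (rule rel_trans[OF r])
  qed
  then have "mt_rel X f x = mt_rel X f y" by (rule ext)
  then show "cls x = cls y" unfolding mt_class_def by simp
qed

lemma F_cls: assumes x: "x \<in> X" shows "F (cls x) = f x"
proof -
  have "x \<in> cls x" unfolding mt_class_def using rel_refl[OF x] by simp
  then have "(SOME y. y \<in> cls x) \<in> cls x" by (rule someI)
  then show ?thesis unfolding mt_fun_def mt_class_def using rel_D by auto
qed

lemma istop: "istopology (\<lambda>U. U \<subseteq> mt_points X f \<and> openin (top_of_set X) {x\<in>X. cls x \<in> U})"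
  unfolding istopology_def
proof (rule conjI; (intro allI impI))
  fix S T
  assume S: "S \<subseteq> mt_points X f \<and> openin (top_of_set X) {x \<in> X. cls x \<in> S}"
    and T: "T \<subseteq> mt_points X f \<and> openin (top_of_set X) {x \<in> X. cls x \<in> T}"
  have "{x \<in> X. cls x \<in> S \<inter> T} = {x \<in> X. cls x \<in> S} \<inter> {x \<in> X. cls x \<in> T}" by auto
  then show "S \<inter> T \<subseteq> mt_points X f \<and> openin (top_of_set X) {x \<in> X. cls x \<in> S \<inter> T}"
    using S T by auto
next
  fix K assume K: "\<forall>S\<in>K. S \<subseteq> mt_points X f \<and> openin (top_of_set X) {x \<in> X. cls x \<in> S}"
  have "{x \<in> X. cls x \<in> \<Union>K} = (\<Union>S\<in>K. {x \<in> X. cls x \<in> S})" by auto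
  then show "\<Union>K \<subseteq> mt_points X f \<and> openin (top_of_set X) {x \<in> X. cls x \<in> \<Union>K}"
    using K by (auto intro!: openin_Union)
qed

lemma openin_T: "openin T U \<longleftrightarrow> U \<subseteq> mt_points X f \<and> openin (top_of_set X) {x\<in>X. cls x \<in> U}"
  unfolding mt_topology_def using topology_inverse'[OF istop] by simp

lemma topspace_T: "topspace T = cls ` X"
proof -
  have "{x\<in>X. cls x \<in> cls ` X} = X" by auto
  then have "openin T (cls ` X)" unfolding openin_T mt_points_def by simp
  then have "cls ` X \<subseteq> topspace T" by (rule openin_subset)
  moreover have "topspace T \<subseteq> cls ` X"
  proof -
    have "openin T (topspace T)" by (rule openin_topspace)
    then show ?thesis unfolding openin_T mt_points_def by (rule conjunct1)
  qed
  ultimately show ?thesis by blast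
qed

lemma sat_open:
  assumes Op: "openin (top_of_set X) Op" and sat: "\<And>x y. x \<in> Op \<Longrightarrow> y \<in> X \<Longrightarrow> cls y = cls x \<Longrightarrow> y \<in> Op"
  shows "openin T (cls ` Op)" and "\<And>y. y \<in> X \<Longrightarrow> cls y \<in> cls ` Op \<Longrightarrow> y \<in> Op"
proof -
  have OpX: "Op \<subseteq> X" using openin_subset[OF Op] by simp
  have eq: "{x\<in>X. cls x \<in> cls ` Op} = Op"
  proof
    show "{x\<in>X. cls x \<in> cls ` Op} \<subseteq> Op"
    proof
      fix x assume "x \<in> {x\<in>X. cls x \<in> cls ` Op}"
      then obtain z where "x \<in> X" "z \<in> Op" "cls x = cls z" by auto
      then show "x \<in> Op" using sat[of z x] by simp
    qed
    show "Op \<subseteq> {x\<in>X. cls x \<in> cls ` Op}" using OpX by auto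
  qed
  show "openin T (cls ` Op)" unfolding openin_T eq mt_points_def using Op OpX by auto
  show "\<And>y. y \<in> X \<Longrightarrow> cls y \<in> cls ` Op \<Longrightarrow> y \<in> Op" using eq by auto
qed

lemma X_max: "X \<noteq> {} \<Longrightarrow> \<exists>xm\<in>X. \<forall>x\<in>X. f x \<le> f xm"
  using continuous_attains_sup[OF cpt _ cont] by auto

lemma cc_top: assumes "\<forall>x\<in>X. f x \<le> b" "v \<in> X" shows "cc b v = X"
proof -
  have "Xs b = X" using assms by auto
  then show ?thesis using connected_component_eq_self[OF conn assms(2)] by simp
qed

lemma mh_set_ne: "v \<in> X \<Longrightarrow> w \<in> X \<Longrightarrow> {b. w \<in> cc b v} \<noteq> {}"
proof -
  assume v: "v \<in> X" and w: "w \<in> X"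
  obtain xm where "xm \<in> X" "\<forall>x\<in>X. f x \<le> f xm" using X_max v by auto
  then have "w \<in> cc (f xm) v" using cc_top[of "f xm" v] v w by auto
  then show ?thesis by auto
qed

lemma mh_bdd: "bdd_below {b. w \<in> cc b v}"
proof (rule bdd_belowI[of _ "f v"])
  fix b assume "b \<in> {b. w \<in> cc b v}"
  then have "w \<in> cc b v" by simp
  from cc_base[OF this] show "f v \<le> b" by simp
qed

lemma mh_le: "w \<in> cc b v \<Longrightarrow> mh v w \<le> b"
  unfolding mheight_def by (rule cInf_lower[OF _ mh_bdd]) auto

lemma mh_ge: assumes "v \<in> X" "w \<in> X" shows "f v \<le> mh v w"
  unfolding mheight_def
proof (rule cInf_greatest[OF mh_set_ne[OF assms]])
  fix b assume "b \<in> {b. w \<in> cc b v}"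
  then have "w \<in> cc b v" by simp
  from cc_base[OF this] show "f v \<le> b" by simp
qed

lemma nest:
  assumes "\<And>e. e > 0 \<Longrightarrow> y \<in> cc (b + e) v"
  shows "y \<in> cc b v"
proof -
  define S where "S = (\<lambda>n::nat. cc (b + 1 / real (Suc n)) v)"
  have "connected (\<Inter>(range S))"
  proof (rule connected_nest)
    show "compact (S n)" for n unfolding S_def by (rule cc_compact)
    show "connected (S n)" for n unfolding S_def by (rule connected_connected_component)
    show "S n \<subseteq> S m" if "m \<le> n" for m n
    proof -
      have "real (Suc m) \<le> real (Suc n)" using that by simp
      then have "1 / real (Suc n) \<le> 1 / real (Suc m)" by (rule divide_left_mono) auto
      then show ?thesis unfolding S_def by (intro cc_mono) simp
    qed
  qed
  moreover have yS: "y \<in> S n" for n unfolding S_def using assms by auto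
  moreover have vS: "v \<in> S n" for n using yS[of n] cc_base cc_self unfolding S_def by blast
  moreover have "\<Inter>(range S) \<subseteq> Xs b"
  proof
    fix z assume z: "z \<in> \<Inter>(range S)"
    then have zX: "z \<in> X" and zb: "\<And>n. f z \<le> b + 1 / real (Suc n)"
      unfolding S_def using cc_sub by blast+
    have "f z \<le> b"
    proof (rule ccontr)
      assume "\<not> f z \<le> b"
      then obtain n where "1 / real (Suc n) < f z - b"
        using reals_Archimedean[of "f z - b"] by (auto simp: inverse_eq_divide)
      then show False using zb[of n] by simp
    qed
    then show "z \<in> Xs b" using zX by simp
  qed
  moreover have "v \<in> \<Inter>(range S)" using vS by blast
  ultimately have "\<Inter>(range S) \<subseteq> cc b v"
    using connected_component_maximal[of v "\<Inter>(range S)" "Xs b"] by simp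
  then show ?thesis using yS by blast
qed

lemma mh_attained: assumes "v \<in> X" "w \<in> X" shows "w \<in> cc (mh v w) v"
proof (rule nest)
  fix e :: real assume e: "e > 0"
  have "Inf {b. w \<in> cc b v} < mh v w + e" unfolding mheight_def using e by simp
  then obtain b where b: "w \<in> cc b v" "b < mh v w + e"
    using cInf_lessD[OF mh_set_ne[OF assms]] by auto
  then show "w \<in> cc (mh v w + e) v" using cc_mono[of b "mh v w + e" v] by auto
qed

end

context mtree begin

lemma sat_lemma1:
  assumes x: "x \<in> X" "f x < b" "x \<in> cc b v" and y: "y \<in> X" "cls y = cls x"
  shows "y \<in> X \<and> f y < b \<and> y \<in> cc b v"
proof -
  have r: "mt_rel X f x y" using cls_eq[OF x(1) y(1)] y(2) by simp
  have d: "f y = f x" "y \<in> cc (f x) x" using rel_D[OF r] by auto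
  have "cc (f x) x \<subseteq> cc b x" using x(2) by (intro cc_mono) simp
  moreover have "cc b x = cc b v" by (rule cc_eq[OF x(3)])
  ultimately have "y \<in> cc b v" using d by auto
  then show ?thesis using d x y by simp
qed

lemma sat_lemma2:
  assumes x: "x \<in> X" "f x \<le> b" "x \<notin> cc b v" and y: "y \<in> X" "cls y = cls x"
  shows "y \<notin> cc b v"
proof
  assume yW: "y \<in> cc b v"
  have r: "mt_rel X f x y" using cls_eq[OF x(1) y(1)] y(2) by simp
  have d: "f y = f x" "y \<in> cc (f x) x" using rel_D[OF r] by auto
  have "y \<in> cc b x" using d cc_mono[of "f x" b x] x(2) by auto
  then have "x \<in> cc b y" by (rule cc_symm)
  moreover have "cc b y = cc b v" by (rule cc_eq[OF yW])
  ultimately show False using x(3) by simp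
qed

lemma lower:
  assumes v: "v \<in> X" and w: "w \<in> X" and G: "connectedin T G" and gv: "cls v \<in> G" and gw: "cls w \<in> G"
    and Fa: "\<And>c. c \<in> G \<Longrightarrow> F c \<le> a"
  shows "mh v w \<le> a"
proof -
  have "w \<in> cc a v"
  proof (rule nest)
    fix e :: real assume e: "e > 0"
    define b where "b = a + e"
    define W where "W = cc b v"
    define O1 where "O1 = {x\<in>X. f x < b \<and> x \<in> W}"
    define O2 where "O2 = {x\<in>X. f x < b \<and> x \<notin> W}"
    have O1o: "openin (top_of_set X) O1" unfolding O1_def W_def by (rule cc_rel_open)
    have O2o: "openin (top_of_set X) O2"
    proof -
      have e2: "O2 = {x\<in>X. f x < b} \<inter> (- W)" unfolding O2_def by auto
      have "open (- W)" unfolding W_def by (rule open_Compl[OF cc_closed])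
      then show ?thesis unfolding e2 by (rule openin_Int_open[OF Xs_open_less])
    qed
    have sat1: "y \<in> O1" if "x \<in> O1" "y \<in> X" "cls y = cls x" for x y
      using sat_lemma1[of x b v y] that unfolding O1_def W_def by simp
    have sat2: "y \<in> O2" if "x \<in> O2" "y \<in> X" "cls y = cls x" for x y
    proof -
      have x: "x \<in> X" "f x < b" "x \<notin> W" using that(1) unfolding O2_def by auto
      have r: "mt_rel X f x y" using cls_eq[OF x(1) that(2)] that(3) by simp
      have d: "f y = f x" using rel_D[OF r] by auto
      have "y \<notin> W" unfolding W_def using sat_lemma2[of x b v y] x that(2,3) unfolding W_def by simp
      then show ?thesis unfolding O2_def using d x that(2) by simp
    qed
    have U1: "openin T (cls ` O1)" by (rule sat_open(1)[OF O1o sat1])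
    have U2: "openin T (cls ` O2)" by (rule sat_open(1)[OF O2o sat2])
    have back1: "\<And>y. y \<in> X \<Longrightarrow> cls y \<in> cls ` O1 \<Longrightarrow> y \<in> O1" by (rule sat_open(2)[OF O1o sat1])
    have GT: "G \<subseteq> topspace T" by (rule connectedin_subset_topspace[OF G])
    have sub: "G \<subseteq> cls ` O1 \<union> cls ` O2"
    proof
      fix c assume c: "c \<in> G"
      then have "c \<in> cls ` X" using GT topspace_T by auto
      then obtain x where x: "x \<in> X" "c = cls x" by auto
      have "f x \<le> a" using Fa[OF c] F_cls[OF x(1)] x(2) by simp
      then have "f x < b" unfolding b_def using e by simp
      then show "c \<in> cls ` O1 \<union> cls ` O2" using x unfolding O1_def O2_def by auto
    qed
    have disj: "cls ` O1 \<inter> cls ` O2 \<inter> G = {}"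
    proof -
      have False if c1: "c \<in> cls ` O1" and c2: "c \<in> cls ` O2" for c
      proof -
        obtain x1 where x1: "x1 \<in> O1" "c = cls x1" using c1 by auto
        obtain x2 where x2: "x2 \<in> O2" "c = cls x2" using c2 by auto
        have "x2 \<in> X" using x2 unfolding O2_def by simp
        then have "x2 \<in> O1" using sat1[of x1 x2] x1 x2 by simp
        then show False using x2(1) unfolding O1_def O2_def by simp
      qed
      then show ?thesis by blast
    qed
    have vO1: "v \<in> O1"
    proof -
      have "f v \<le> a" using Fa[OF gv] F_cls[OF v] by simp
      then have "f v < b" "f v \<le> b" unfolding b_def using e by auto
      then show ?thesis unfolding O1_def W_def using v cc_self[OF v] by simp
    qed
    have ne1: "cls ` O1 \<inter> G \<noteq> {}" using vO1 gv by blast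
    have "cls ` O2 \<inter> G = {}"
      using G[unfolded connectedin] U1 U2 sub disj ne1 by blast
    then have "cls w \<notin> cls ` O2" using gw by blast
    then have "cls w \<in> cls ` O1" using sub gw by blast
    then have "w \<in> O1" using back1[OF w] by simp
    then show "w \<in> cc (a + e) v" unfolding O1_def W_def b_def by simp
  qed
  then show ?thesis by (rule mh_le)
qed

lemma upper:
  assumes v: "v \<in> X" and w: "w \<in> X" and g: "pathin T g" and inj: "inj_on g {0..1}"
    and g0: "g 0 = cls v" and g1: "g 1 = cls w" and wA: "w \<in> cc b v" and t: "t \<in> {0..1}"
  shows "F (g t) \<le> b"
proof (rule ccontr)
  assume "\<not> F (g t) \<le> b"
  then have big: "F (g t) > b" by simp
  define A where "A = cc b v"
  define O1 where "O1 = {x\<in>X. f x < b \<and> x \<in> A}"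
  define O2 where "O2 = X - A"
  have O1o: "openin (top_of_set X) O1" unfolding O1_def A_def by (rule cc_rel_open)
  have O2o: "openin (top_of_set X) O2"
  proof -
    have "openin (top_of_set X) (X \<inter> (- A))" unfolding A_def by (rule openin_open_Int[OF open_Compl[OF cc_closed]])
    moreover have "X \<inter> (- A) = O2" unfolding O2_def by auto
    ultimately show ?thesis by simp
  qed
  have sat1: "y \<in> O1" if "x \<in> O1" "y \<in> X" "cls y = cls x" for x y
    using sat_lemma1[of x b v y] that unfolding O1_def A_def by simp
  have sat2: "y \<in> O2" if "x \<in> O2" "y \<in> X" "cls y = cls x" for x y
  proof -
    have x: "x \<in> X" "x \<notin> A" using that(1) unfolding O2_def by auto
    show ?thesis
    proof (cases "f x \<le> b")
      case True
      then have "y \<notin> A" unfolding A_def using sat_lemma2[of x b v y] x that(2,3) unfolding A_def by simp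
      then show ?thesis unfolding O2_def using that(2) by simp
    next
      case False
      have r: "mt_rel X f x y" using cls_eq[OF x(1) that(2)] that(3) by simp
      have "f y = f x" using rel_D[OF r] by auto
      then have "y \<notin> A" unfolding A_def using False cc_sub[of y b v] by auto
      then show ?thesis unfolding O2_def using that(2) by simp
    qed
  qed
  have U1: "openin T (cls ` O1)" by (rule sat_open(1)[OF O1o sat1])
  have U2: "openin T (cls ` O2)" by (rule sat_open(1)[OF O2o sat2])
  have gc: "continuous_map (subtopology euclideanreal {0..1}) T g" using g unfolding pathin_def .
  have gT: "g s \<in> topspace T" if "s \<in> {0..1}" for s
    using continuous_map_image_subset_topspace[OF gc] that by auto
  define star where "star = (\<lambda>c. \<exists>z\<in>A. f z = b \<and> c = cls z)"
  have star_unique: "c = c'" if sc: "star c" and sc': "star c'" for c c'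
  proof -
    obtain z where z: "z \<in> A" "f z = b" "c = cls z" using sc unfolding star_def by auto
    obtain z' where z': "z' \<in> A" "f z' = b" "c' = cls z'" using sc' unfolding star_def by auto
    have zX: "z \<in> X" "z' \<in> X" using z(1) z'(1) cc_sub unfolding A_def by blast+
    have "cc b z = A" unfolding A_def by (rule cc_eq[OF z(1)[unfolded A_def]])
    then have "z' \<in> cc (f z) z" using z'(1) z(2) by simp
    then have "mt_rel X f z z'" unfolding mt_rel_def using zX z z' by simp
    then show ?thesis using cls_eq[OF zX] z z' by simp
  qed
  have F_star: "F c = b" if sc: "star c" for c
  proof -
    obtain z where z: "z \<in> A" "f z = b" "c = cls z" using sc unfolding star_def by auto
    have "z \<in> X" using z(1) cc_sub unfolding A_def by blast
    then show ?thesis using F_cls z by simp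
  qed
  have F_O1: "F c < b" if c1: "c \<in> cls ` O1" for c
  proof -
    obtain x where x: "x \<in> O1" "c = cls x" using c1 by auto
    then show ?thesis using F_cls[of x] unfolding O1_def by auto
  qed
  have cover: "c \<in> cls ` O1 \<or> star c \<or> c \<in> cls ` O2" if cT: "c \<in> topspace T" for c
  proof -
    obtain x where x: "x \<in> X" "c = cls x" using cT topspace_T by auto
    show ?thesis
    proof (cases "x \<in> A")
      case True
      then have "f x \<le> b" using cc_sub unfolding A_def by blast
      then show ?thesis unfolding O1_def star_def using x True by (cases "f x < b") auto
    next
      case False
      then show ?thesis unfolding O2_def using x by auto
    qed
  qed
  have end_ok: "cls u \<in> cls ` O1 \<or> star (cls u)" if "u \<in> A" for u
  proof -
    have "u \<in> X" "f u \<le> b" using that cc_sub unfolding A_def by blast+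
    then show ?thesis unfolding O1_def star_def using that by (cases "f u < b") auto
  qed
  have vA: "v \<in> A" unfolding A_def using cc_base[OF wA] cc_self by blast
  have wA': "w \<in> A" unfolding A_def by (rule wA)
  have disj: "cls ` O1 \<inter> cls ` O2 = {}"
  proof -
    have False if c1: "c \<in> cls ` O1" and c2: "c \<in> cls ` O2" for c
    proof -
      obtain x1 where x1: "x1 \<in> O1" "c = cls x1" using c1 by auto
      obtain x2 where x2: "x2 \<in> O2" "c = cls x2" using c2 by auto
      have "x2 \<in> X" using x2 unfolding O2_def by simp
      then have "x2 \<in> O1" using sat1[of x1 x2] x1 x2 by simp
      then show False using x2(1) unfolding O1_def O2_def by simp
    qed
    then show ?thesis by blast
  qed
  have claim: "g s \<in> cls ` O1"
    if s12: "0 \<le> s1" "s1 \<le> s2" "s2 \<le> 1" and ns: "\<And>s. s \<in> {s1..s2} \<Longrightarrow> \<not> star (g s)"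
      and e: "g s1 \<in> cls ` O1 \<or> g s2 \<in> cls ` O1" and s: "s \<in> {s1..s2}" for s1 s2 s
  proof (rule ccontr)
    assume ns1: "g s \<notin> cls ` O1"
    define G where "G = g ` {s1..s2}"
    have "connectedin (subtopology euclideanreal {0..1}) {s1..s2}"
      using s12 by (simp add: connectedin_subtopology)
    then have G: "connectedin T G" unfolding G_def by (rule connectedin_continuous_map_image[OF gc])
    have sub: "G \<subseteq> cls ` O1 \<union> cls ` O2"
    proof
      fix c assume "c \<in> G"
      then obtain s' where s': "s' \<in> {s1..s2}" "c = g s'" unfolding G_def by auto
      have "s' \<in> {0..1}" using s' s12 by auto
      then show "c \<in> cls ` O1 \<union> cls ` O2" using cover[OF gT] ns[OF s'(1)] s'(2) by blast
    qed
    have "g s \<in> cls ` O2" using sub s ns1 unfolding G_def by blast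
    then have n2: "cls ` O2 \<inter> G \<noteq> {}" using s unfolding G_def by blast
    have "s1 \<in> {s1..s2}" "s2 \<in> {s1..s2}" using s12 by auto
    then have "g s1 \<in> G" "g s2 \<in> G" unfolding G_def by auto
    then have n1: "cls ` O1 \<inter> G \<noteq> {}" using e by blast
    have "openin T (cls ` O1) \<and> openin T (cls ` O2) \<and> G \<subseteq> cls ` O1 \<union> cls ` O2 \<and>
        cls ` O1 \<inter> cls ` O2 \<inter> G = {} \<and> cls ` O1 \<inter> G \<noteq> {} \<and> cls ` O2 \<inter> G \<noteq> {}"
      using U1 U2 sub disj n1 n2 by simp
    then have "\<exists>E1 E2. openin T E1 \<and> openin T E2 \<and> G \<subseteq> E1 \<union> E2 \<and>
        E1 \<inter> E2 \<inter> G = {} \<and> E1 \<inter> G \<noteq> {} \<and> E2 \<inter> G \<noteq> {}"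
      by (intro exI[of _ "cls ` O1"] exI[of _ "cls ` O2"])
    moreover have "\<not> (\<exists>E1 E2. openin T E1 \<and> openin T E2 \<and> G \<subseteq> E1 \<union> E2 \<and>
        E1 \<inter> E2 \<inter> G = {} \<and> E1 \<inter> G \<noteq> {} \<and> E2 \<inter> G \<noteq> {})"
      using G[unfolded connectedin] by (rule conjunct2)
    ultimately show False by (rule notE[rotated])
  qed
  have t_not: "g t \<notin> cls ` O1" "\<not> star (g t)" using big F_O1 F_star by force+
  show False
  proof (cases "\<exists>s\<in>{0..1}. s < t \<and> star (g s)")
    case True
    then obtain s0 where s0: "s0 \<in> {0..1}" "s0 < t" "star (g s0)" by auto
    have ns: "\<not> star (g s)" if "s \<in> {t..1}" for s
    proof
      assume "star (g s)"
      then have "g s = g s0" using star_unique s0(3) by blast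
      then have "s = s0" using inj s0(1) that t by (auto simp: inj_on_def)
      then show False using that s0(2) by simp
    qed
    have "g 1 \<in> cls ` O1"
      using end_ok[OF wA'] g1 ns[of 1] t by auto
    then have "g t \<in> cls ` O1" using claim[of t 1 t] ns t by auto
    then show False using t_not by simp
  next
    case False
    have ns: "\<not> star (g s)" if "s \<in> {0..t}" for s
    proof (cases "s = t")
      case True then show ?thesis using t_not by simp
    next
      case False
      then have "s < t" "s \<in> {0..1}" using that t by auto
      then show ?thesis using \<open>\<not> (\<exists>s\<in>{0..1}. s < t \<and> star (g s))\<close> by blast
    qed
    have "g 0 \<in> cls ` O1"
      using end_ok[OF vA] g0 ns[of 0] t by auto
    then have "g t \<in> cls ` O1" using claim[of 0 t t] ns t by auto
    then show False using t_not by simp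
  qed
qed

end

context mtree begin

definition lev :: "'a \<Rightarrow> real \<Rightarrow> 'a set" where "lev v h = {y \<in> cc h v. f y = h}"
definition alpha :: "'a \<Rightarrow> real \<Rightarrow> 'a set" where "alpha v h = cls (SOME y. y \<in> lev v h)"

lemma mh_sym: "mh v w = mh w v"
proof -
  have "{b. w \<in> cc b v} = {b. v \<in> cc b w}" using cc_symm by blast
  then show ?thesis unfolding mheight_def by simp
qed

lemma lev_ne:
  assumes v: "v \<in> X" and w: "w \<in> X" and h: "f v \<le> h" "h \<le> mh v w"
  shows "lev v h \<noteq> {}"
proof (cases "h = f v")
  case True
  then have "v \<in> lev v h" unfolding lev_def using cc_self[OF v, of h] v by simp
  then show ?thesis by blast
next
  case False
  show ?thesis
  proof
    assume e: "lev v h = {}"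
    define A where "A = cc h v"
    have vA: "v \<in> A" unfolding A_def using cc_self[OF v] h by simp
    have AX: "A \<subseteq> X" unfolding A_def using cc_sub by blast
    have Alt: "f y < h" if "y \<in> A" for y
    proof -
      have "f y \<le> h" using that cc_sub unfolding A_def by blast
      moreover have "f y \<noteq> h" using that e unfolding lev_def A_def by blast
      ultimately show ?thesis by simp
    qed
    have contA: "continuous_on A f" using continuous_on_subset[OF cont AX] .
    obtain xm where xm: "xm \<in> A" "\<And>y. y \<in> A \<Longrightarrow> f y \<le> f xm"
      using continuous_attains_sup[OF _ _ contA] cc_compact vA unfolding A_def by blast
    have op: "openin (top_of_set X) A"
    proof -
      have "A = {x\<in>X. f x < h \<and> x \<in> cc h v}" using AX Alt unfolding A_def by auto
      then show ?thesis using cc_rel_open by simp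
    qed
    have cl: "closedin (top_of_set X) A" unfolding A_def by (rule closed_subset[OF _ cc_closed]) (use AX A_def in simp)
    have "A = {} \<or> A = X" using conn[unfolded connected_clopen] op cl by blast
    then have AeX: "A = X" using vA by blast
    then have "\<forall>x\<in>X. f x \<le> f xm" using xm by simp
    then have "cc (f xm) v = X" by (rule cc_top[OF _ v])
    then have "mh v w \<le> f xm" using mh_le[of w "f xm" v] w by simp
    moreover have "f xm < h" using Alt xm by simp
    ultimately show False using h by simp
  qed
qed

lemma lev_D: "y \<in> lev v h \<Longrightarrow> y \<in> X \<and> f y = h \<and> y \<in> cc h v"
  unfolding lev_def using cc_sub by blast

lemma lev_rel: assumes y: "y \<in> lev v h" and y': "y' \<in> lev v h" shows "cls y = cls y'"
proof -
  have a: "y \<in> X" "f y = h" "y \<in> cc h v" using lev_D[OF y] by auto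
  have b: "y' \<in> X" "f y' = h" "y' \<in> cc h v" using lev_D[OF y'] by auto
  have "cc h y = cc h v" by (rule cc_eq[OF a(3)])
  then have "y' \<in> cc (f y) y" using a b by simp
  then have "mt_rel X f y y'" unfolding mt_rel_def using a b by simp
  then show ?thesis using cls_eq[OF a(1) b(1)] by simp
qed

lemma alpha_eq: assumes "y \<in> lev v h" shows "alpha v h = cls y"
proof -
  have "(SOME y. y \<in> lev v h) \<in> lev v h" using assms by (rule someI)
  then show ?thesis unfolding alpha_def using lev_rel assms by blast
qed

lemma alpha_lev: assumes "lev v h \<noteq> {}" obtains y where "y \<in> lev v h" "alpha v h = cls y"
  using assms alpha_eq by blast

lemma F_alpha: assumes "lev v h \<noteq> {}" shows "F (alpha v h) = h"
proof -
  obtain y where y: "y \<in> lev v h" "alpha v h = cls y" using alpha_lev[OF assms] by blast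
  then show ?thesis using F_cls lev_D[OF y(1)] by simp
qed

lemma alpha_local:
  assumes v: "v \<in> X" and w: "w \<in> X" and h0: "h0 \<in> {f v..mh v w}"
    and V: "openin T V" and aV: "alpha v h0 \<in> V"
  shows "\<exists>d>0. \<forall>h\<in>{f v..mh v w}. \<bar>h - h0\<bar> < d \<longrightarrow> alpha v h \<in> V"
proof (rule ccontr)
  assume "\<not> ?thesis"
  then have "\<forall>n::nat. \<exists>h. h \<in> {f v..mh v w} \<and> \<bar>h - h0\<bar> < 1 / real (Suc n) \<and> alpha v h \<notin> V"
    by (metis of_nat_0_less_iff zero_less_Suc zero_less_divide_1_iff)
  then obtain hs where hs: "\<And>n. hs n \<in> {f v..mh v w} \<and> \<bar>hs n - h0\<bar> < 1 / real (Suc n) \<and> alpha v (hs n) \<notin> V"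
    using choice[of "\<lambda>n h. h \<in> {f v..mh v w} \<and> \<bar>h - h0\<bar> < 1 / real (Suc n) \<and> alpha v h \<notin> V"] by blast
  define ys where "ys = (\<lambda>n. SOME y. y \<in> lev v (hs n))"
  have ys: "ys n \<in> lev v (hs n)" for n
  proof -
    have "lev v (hs n) \<noteq> {}" using lev_ne[OF v w] hs[of n] by simp
    then show ?thesis unfolding ys_def by (simp add: some_in_eq)
  qed
  have ysX: "ys n \<in> X" and fys: "f (ys n) = hs n" and ysc: "ys n \<in> cc (hs n) v" for n
    using lev_D[OF ys] by auto
  have ysV: "cls (ys n) \<notin> V" for n using hs[of n] alpha_eq[OF ys] by simp
  obtain l r where l: "l \<in> X" and r: "strict_mono r" and lim: "(ys \<circ> r) \<longlonglongrightarrow> l"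
    using seq_compactE[OF compact_imp_seq_compact[OF cpt], of ys] ysX by metis
  have hlim: "hs \<longlonglongrightarrow> h0"
  proof (rule LIMSEQ_I)
    fix e :: real assume e: "0 < e"
    obtain N where N: "inverse (real (Suc N)) < e" using reals_Archimedean[OF e] by blast
    have "norm (hs n - h0) < e" if "n \<ge> N" for n
    proof -
      have "1 / real (Suc n) \<le> 1 / real (Suc N)" using that by (intro divide_left_mono) auto
      then show ?thesis using hs[of n] N by (simp add: inverse_eq_divide)
    qed
    then show "\<exists>no. \<forall>n\<ge>no. norm (hs n - h0) < e" by blast
  qed
  then have hlimr: "(hs \<circ> r) \<longlonglongrightarrow> h0" using r by (rule LIMSEQ_subseq_LIMSEQ)
  have "(\<lambda>n. f ((ys \<circ> r) n)) \<longlonglongrightarrow> f l"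
    by (rule continuous_on_tendsto_compose[OF cont lim l]) (simp add: ysX)
  moreover have "(\<lambda>n. f ((ys \<circ> r) n)) = hs \<circ> r" using fys by auto
  ultimately have "(hs \<circ> r) \<longlonglongrightarrow> f l" by simp
  then have fl: "f l = h0" using hlimr LIMSEQ_unique by blast
  have "l \<in> cc (h0 + e) v" if e: "e > 0" for e
  proof (rule Lim_in_closed_set[OF cc_closed _ _ lim])
    have "\<forall>\<^sub>F n in sequentially. (hs \<circ> r) n < h0 + e"
      using order_tendstoD(2)[OF hlimr, of "h0 + e"] e by simp
    then show "\<forall>\<^sub>F n in sequentially. (ys \<circ> r) n \<in> cc (h0 + e) v"
    proof (rule eventually_mono)
      fix n assume "(hs \<circ> r) n < h0 + e"
      then show "(ys \<circ> r) n \<in> cc (h0 + e) v" using ysc[of "r n"] cc_mono[of "hs (r n)" "h0 + e" v] by auto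
    qed
  qed simp
  then have "l \<in> cc h0 v" by (rule nest)
  then have "l \<in> lev v h0" unfolding lev_def using fl by simp
  then have "cls l \<in> V" using aV alpha_eq by simp
  then have lP: "l \<in> {x\<in>X. cls x \<in> V}" using l by simp
  have "openin (top_of_set X) {x\<in>X. cls x \<in> V}" using V openin_T by simp
  then obtain G where G: "open G" "{x\<in>X. cls x \<in> V} = X \<inter> G" unfolding openin_open by blast
  have "l \<in> G" using lP G by blast
  then have "\<forall>\<^sub>F n in sequentially. (ys \<circ> r) n \<in> G" by (rule topological_tendstoD[OF lim G(1)])
  then obtain N where "\<forall>n\<ge>N. (ys \<circ> r) n \<in> G" unfolding eventually_sequentially by blast
  then have "ys (r N) \<in> G" by simp
  then have "ys (r N) \<in> {x\<in>X. cls x \<in> V}" using G ysX by blast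
  then show False using ysV by simp
qed

lemma alpha_cont:
  assumes v: "v \<in> X" and w: "w \<in> X"
  shows "continuous_map (subtopology euclideanreal {f v..mh v w}) T (alpha v)"
  unfolding continuous_map_eq_topcontinuous_at topcontinuous_at_def
proof (intro ballI conjI allI impI)
  fix h0 assume h0: "h0 \<in> topspace (subtopology euclideanreal {f v..mh v w})"
  then show "h0 \<in> topspace (subtopology euclideanreal {f v..mh v w})" .
  show "alpha v \<in> topspace (subtopology euclideanreal {f v..mh v w}) \<rightarrow> topspace T"
  proof
    fix h assume "h \<in> topspace (subtopology euclideanreal {f v..mh v w})"
    then have "lev v h \<noteq> {}" using lev_ne[OF v w] by simp
    then obtain y where "y \<in> lev v h" "alpha v h = cls y" by (rule alpha_lev)
    then show "alpha v h \<in> topspace T" using topspace_T lev_D by auto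
  qed
  fix V assume V: "openin T V \<and> alpha v h0 \<in> V"
  have h0': "h0 \<in> {f v..mh v w}" using h0 by simp
  obtain d where d: "d > 0" "\<forall>h\<in>{f v..mh v w}. \<bar>h - h0\<bar> < d \<longrightarrow> alpha v h \<in> V"
    using alpha_local[OF v w h0'] V by blast
  show "\<exists>U. openin (subtopology euclideanreal {f v..mh v w}) U \<and> h0 \<in> U \<and> (\<forall>y\<in>U. alpha v y \<in> V)"
  proof (intro exI conjI)
    show "openin (subtopology euclideanreal {f v..mh v w}) (ball h0 d \<inter> {f v..mh v w})"
      unfolding openin_subtopology by (intro exI[of _ "ball h0 d"]) (simp add: open_openin[symmetric])
    show "h0 \<in> ball h0 d \<inter> {f v..mh v w}" using d h0' by simp
    show "\<forall>y\<in>ball h0 d \<inter> {f v..mh v w}. alpha v y \<in> V"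
      using d by (auto simp: dist_real_def abs_minus_commute)
  qed
qed

lemma cross:
  assumes v: "v \<in> X" and w: "w \<in> X" and h: "h < mh v w" "f v \<le> h" "f w \<le> h"
  shows "alpha v h \<noteq> alpha w h"
proof
  assume eq: "alpha v h = alpha w h"
  have "lev v h \<noteq> {}" using lev_ne[OF v w] h by simp
  then obtain y where y: "y \<in> lev v h" "alpha v h = cls y" by (rule alpha_lev)
  have "lev w h \<noteq> {}" using lev_ne[OF w v] h mh_sym[of v w] by simp
  then obtain y' where y': "y' \<in> lev w h" "alpha w h = cls y'" by (rule alpha_lev)
  have a: "y \<in> X" "f y = h" "y \<in> cc h v" using lev_D[OF y(1)] by auto
  have b: "y' \<in> X" "f y' = h" "y' \<in> cc h w" using lev_D[OF y'(1)] by auto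
  have "mt_rel X f y y'" using cls_eq[OF a(1) b(1)] eq y y' by simp
  then have "y' \<in> cc (f y) y" using rel_D by blast
  then have "y' \<in> cc h y" using a by simp
  then have c1: "cc h y' = cc h v" using cc_eq[of y' h y] cc_eq[OF a(3)] by simp
  have c2: "cc h y' = cc h w" by (rule cc_eq[OF b(3)])
  have ww: "w \<in> cc h w" using cc_self[OF w] h by simp
  have e: "cc h w = cc h v" using c1 c2 by simp
  have "w \<in> cc h v" using ww unfolding e .
  then have "mh v w \<le> h" by (rule mh_le)
  then show False using h by simp
qed

lemma arc_exists:
  assumes v: "v \<in> X" and w: "w \<in> X" and ne: "cls v \<noteq> cls w"
  shows "\<exists>g. arc_in T g \<and> g 0 = cls v \<and> g 1 = cls w"
proof -
  define m where "m = mh v w"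
  have mwv: "mh w v = m" unfolding m_def by (rule mh_sym)
  have fvm: "f v \<le> m" unfolding m_def by (rule mh_ge[OF v w])
  have fwm: "f w \<le> m" using mh_ge[OF w v] mwv by simp
  have wcc: "w \<in> cc m v" unfolding m_def by (rule mh_attained[OF v w])
  define Lv where "Lv = m - f v"
  define Lw where "Lw = m - f w"
  define L where "L = Lv + Lw"
  have Lv0: "Lv \<ge> 0" and Lw0: "Lw \<ge> 0" using fvm fwm unfolding Lv_def Lw_def by auto
  have Lpos: "L > 0"
  proof (rule ccontr)
    assume "\<not> L > 0"
    then have "f v = m" "f w = m" using Lv0 Lw0 unfolding L_def Lv_def Lw_def by auto
    then have "mt_rel X f v w" unfolding mt_rel_def using v w wcc by simp
    then show False using ne cls_eq[OF v w] by simp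
  qed
  have av: "lev v h \<noteq> {}" if "h \<in> {f v..m}" for h using lev_ne[OF v w] that unfolding m_def by simp
  have aw: "lev w h \<noteq> {}" if "h \<in> {f w..m}" for h using lev_ne[OF w v] that mwv by simp
  have meet: "alpha v m = alpha w m"
  proof -
    have "lev v m \<noteq> {}" using av[of m] fvm by simp
    then obtain y where y: "y \<in> lev v m" "alpha v m = cls y" by (rule alpha_lev)
    have "y \<in> cc m v" using lev_D[OF y(1)] by simp
    moreover have "cc m w = cc m v" by (rule cc_eq[OF wcc])
    ultimately have "y \<in> lev w m" using lev_D[OF y(1)] unfolding lev_def by simp
    then show ?thesis using y alpha_eq by simp
  qed
  define bt where "bt = (\<lambda>s. if s * L \<le> Lv then alpha v (f v + s * L) else alpha w (f w + (1 - s) * L))"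
  have cv: "continuous_map (top_of_set S) T (\<lambda>s. alpha v (f v + s * L))"
    if S: "\<And>s. s \<in> S \<Longrightarrow> 0 \<le> s \<and> s * L \<le> Lv" for S
  proof -
    have "continuous_map (top_of_set S) (top_of_set {f v..mh v w}) (\<lambda>s. f v + s * L)"
      unfolding continuous_map_in_subtopology
    proof
      show "continuous_map (top_of_set S) euclideanreal (\<lambda>s. f v + s * L)"
        by (simp add: continuous_intros)
      show "(\<lambda>s. f v + s * L) \<in> topspace (top_of_set S) \<rightarrow> {f v..mh v w}"
      proof
        fix s assume "s \<in> topspace (top_of_set S)"
        then have s: "0 \<le> s" "s * L \<le> Lv" using S by auto
        have "0 \<le> s * L" using s Lpos by simp
        then show "f v + s * L \<in> {f v..mh v w}" using s(2) unfolding Lv_def m_def by simp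
      qed
    qed
    from continuous_map_compose[OF this alpha_cont[OF v w]]
    show ?thesis by (simp add: o_def)
  qed
  have cw: "continuous_map (top_of_set S) T (\<lambda>s. alpha w (f w + (1 - s) * L))"
    if S: "\<And>s. s \<in> S \<Longrightarrow> s \<le> 1 \<and> Lv \<le> s * L" for S
  proof -
    have "continuous_map (top_of_set S) (top_of_set {f w..mh w v}) (\<lambda>s. f w + (1 - s) * L)"
      unfolding continuous_map_in_subtopology
    proof
      show "continuous_map (top_of_set S) euclideanreal (\<lambda>s. f w + (1 - s) * L)"
        by (simp add: continuous_intros)
      show "(\<lambda>s. f w + (1 - s) * L) \<in> topspace (top_of_set S) \<rightarrow> {f w..mh w v}"
      proof
        fix s assume "s \<in> topspace (top_of_set S)"
        then have s: "s \<le> 1" "Lv \<le> s * L" using S by auto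
        have "0 \<le> (1 - s) * L" using s Lpos by simp
        moreover have "(1 - s) * L \<le> Lw" using s unfolding L_def by (simp add: algebra_simps)
        ultimately show "f w + (1 - s) * L \<in> {f w..mh w v}" using mwv unfolding Lw_def by simp
      qed
    qed
    from continuous_map_compose[OF this alpha_cont[OF w v]]
    show ?thesis by (simp add: o_def)
  qed
  have path: "pathin T bt"
    unfolding pathin_def bt_def
  proof (rule continuous_map_cases_le)
    show "continuous_map (top_of_set {0..1}) euclideanreal (\<lambda>s. s * L)" by (simp add: continuous_intros)
    show "continuous_map (top_of_set {0..1}) euclideanreal (\<lambda>s. Lv)" by simp
    show "continuous_map (subtopology (top_of_set {0..1}) {x \<in> topspace (top_of_set {0..1}). x * L \<le> Lv}) T
        (\<lambda>s. alpha v (f v + s * L))"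
      unfolding subtopology_subtopology by (rule cv) auto
    show "continuous_map (subtopology (top_of_set {0..1}) {x \<in> topspace (top_of_set {0..1}). Lv \<le> x * L}) T
        (\<lambda>s. alpha w (f w + (1 - s) * L))"
      unfolding subtopology_subtopology by (rule cw) auto
    fix s assume "s \<in> topspace (top_of_set {0..1::real})" "s * L = Lv"
    then have "f v + s * L = m" "f w + (1 - s) * L = m" unfolding Lv_def L_def Lw_def
      by (auto simp: algebra_simps)
    then show "alpha v (f v + s * L) = alpha w (f w + (1 - s) * L)" using meet by simp
  qed
  have lvl: "F (bt s) = (if s * L \<le> Lv then f v + s * L else f w + (1 - s) * L)" if s: "s \<in> {0..1}" for s
  proof (cases "s * L \<le> Lv")
    case True
    then have "f v + s * L \<in> {f v..m}" using s Lpos unfolding Lv_def by auto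
    then show ?thesis unfolding bt_def using True F_alpha[OF av] by simp
  next
    case False
    have "(1 - s) * L \<le> Lw" using False unfolding L_def by (simp add: algebra_simps)
    moreover have "0 \<le> (1 - s) * L" using s Lpos by simp
    ultimately have "(1 - s) * L \<le> Lw" "0 \<le> (1 - s) * L" by auto
    then have "f w + (1 - s) * L \<in> {f w..m}" unfolding Lw_def by auto
    then show ?thesis unfolding bt_def using False F_alpha[OF aw] by simp
  qed
  have mixed: "bt s \<noteq> bt s'" if s: "s \<in> {0..1}" "s * L \<le> Lv" and s': "s' \<in> {0..1}" "\<not> s' * L \<le> Lv" for s s'
  proof
    assume eq: "bt s = bt s'"
    have "F (bt s) = F (bt s')" using eq by simp
    then have hh: "f v + s * L = f w + (1 - s') * L" using lvl[OF s(1)] lvl[OF s'(1)] s s' by simp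
    define h where "h = f v + s * L"
    have hlt: "h < m" using hh s' unfolding h_def L_def Lw_def by (simp add: algebra_simps)
    have hv: "f v \<le> h" unfolding h_def using s Lpos by simp
    have "0 \<le> (1 - s') * L" using s' Lpos by simp
    then have hw: "f w \<le> h" using hh unfolding h_def by linarith
    have "bt s = alpha v h" unfolding bt_def h_def using s by simp
    moreover have "bt s' = alpha w h" unfolding bt_def using s' hh h_def by simp
    ultimately show False using eq cross[OF v w _ hv hw] hlt unfolding m_def by simp
  qed
  have inj: "inj_on bt {0..1}"
  proof (rule inj_onI)
    fix s s' assume s: "s \<in> {0..1}" and s': "s' \<in> {0..1}" and eq: "bt s = bt s'"
    have lv: "(if s * L \<le> Lv then f v + s * L else f w + (1 - s) * L) =
      (if s' * L \<le> Lv then f v + s' * L else f w + (1 - s') * L)"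
      using lvl[OF s] lvl[OF s'] eq by simp
    show "s = s'"
    proof (cases "s * L \<le> Lv")
      case True
      show ?thesis
      proof (cases "s' * L \<le> Lv")
        case True
        then have "s * L = s' * L" using lv \<open>s * L \<le> Lv\<close> by simp
        then show ?thesis using Lpos by simp
      next
        case False
        then show ?thesis using mixed[OF s \<open>s * L \<le> Lv\<close> s'] eq by simp
      qed
    next
      case False
      show ?thesis
      proof (cases "s' * L \<le> Lv")
        case True
        then show ?thesis using mixed[OF s' True s False] eq by simp
      next
        case False
        then have "(1 - s) * L = (1 - s') * L" using lv \<open>\<not> s * L \<le> Lv\<close> by simp
        then show ?thesis using Lpos by simp
      qed
    qed
  qed
  have b0: "bt 0 = cls v"
  proof -
    have "v \<in> lev v (f v)" unfolding lev_def using cc_self[OF v, of "f v"] v by simp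
    then show ?thesis unfolding bt_def using Lv0 alpha_eq by simp
  qed
  have b1: "bt 1 = cls w"
  proof (cases "L \<le> Lv")
    case True
    then have "Lw = 0" using Lw0 unfolding L_def by simp
    then have "f w = m" unfolding Lw_def by simp
    then have "w \<in> lev v m" unfolding lev_def using wcc by simp
    moreover have "f v + L = m" using \<open>Lw = 0\<close> unfolding L_def Lv_def by simp
    ultimately show ?thesis unfolding bt_def using True alpha_eq by simp
  next
    case False
    have "w \<in> lev w (f w)" unfolding lev_def using cc_self[OF w, of "f w"] w by simp
    then show ?thesis unfolding bt_def using False alpha_eq by simp
  qed
  show ?thesis unfolding arc_in_def using path inj b0 b1 by blast
qed

end

context mtree begin

lemma lca_eq:
  assumes v: "v \<in> X" and w: "w \<in> X"
  shows "lca_matrix X f v w = mh v w"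
proof (cases "cls v = cls w")
  case True
  have geo: "mt_geodesic X f (cls v) (cls w) = {cls v}"
    unfolding mt_geodesic_def using True by simp
  have r: "mt_rel X f v w" using cls_eq[OF v w] True by simp
  then have "w \<in> cc (f v) v" using rel_D by blast
  then have "mh v w \<le> f v" by (rule mh_le)
  moreover have "f v \<le> mh v w" by (rule mh_ge[OF v w])
  ultimately have "mh v w = f v" by simp
  then show ?thesis unfolding lca_matrix_def geo using F_cls[OF v] by simp
next
  case False
  define P where "P = (\<lambda>G. (cls v = cls w \<and> G = {cls v}) \<or>
      (cls v \<noteq> cls w \<and> (\<exists>g. arc_in T g \<and> g 0 = cls v \<and> g 1 = cls w \<and> G = g ` {0..1})))"
  obtain g0 where "arc_in T g0 \<and> g0 0 = cls v \<and> g0 1 = cls w" using arc_exists[OF v w False] by blast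
  then have "P (g0 ` {0..1})" unfolding P_def using False by blast
  then have "P (SOME G. P G)" by (rule someI)
  then obtain g where g: "arc_in T g" "g 0 = cls v" "g 1 = cls w"
      and geo: "mt_geodesic X f (cls v) (cls w) = g ` {0..1}"
    unfolding P_def mt_geodesic_def using False by blast
  have path: "pathin T g" and inj: "inj_on g {0..1}" using g(1) unfolding arc_in_def by auto
  have wcc: "w \<in> cc (mh v w) v" by (rule mh_attained[OF v w])
  have ub: "F c \<le> mh v w" if "c \<in> g ` {0..1}" for c
    using upper[OF v w path inj g(2) g(3) wcc] that by blast
  have ne: "F ` g ` {0..1} \<noteq> {}" by simp
  have bdd: "bdd_above (F ` g ` {0..1})" using ub by (intro bdd_aboveI) blast
  have le1: "Sup (F ` g ` {0..1}) \<le> mh v w" using ub by (intro cSup_least[OF ne]) blast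
  have conn_img: "connectedin T (g ` {0..1})"
  proof -
    have "connectedin (subtopology euclideanreal {0..1}) {0..1::real}"
      by (simp add: connectedin_subtopology)
    then show ?thesis using connectedin_continuous_map_image path unfolding pathin_def by blast
  qed
  have "cls v \<in> g ` {0..1}" "cls w \<in> g ` {0..1}" using g(2,3) by force+
  then have le2: "mh v w \<le> Sup (F ` g ` {0..1})"
    using lower[OF v w conn_img] cSup_upper[OF _ bdd] by blast
  show ?thesis unfolding lca_matrix_def geo using le1 le2 by simp
qed

end

lemma mh_compare:
  fixes X :: "'a::euclidean_space set"
  assumes mf: "mtree X f" and mg: "mtree X g" and v: "v \<in> X" and w: "w \<in> X"
    and M: "\<And>x. x \<in> X \<Longrightarrow> \<bar>f x - g x\<bar> \<le> M"
  shows "mheight X g v w \<le> mheight X f v w + M"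
proof -
  have "mheight X g v w - M \<le> mheight X f v w"
    unfolding mheight_def[of X f]
  proof (rule cInf_greatest)
    show "{b. w \<in> connected_component_set {y \<in> X. f y \<le> b} v} \<noteq> {}"
      by (rule mtree.mh_set_ne[OF mf v w])
  next
    fix b assume "b \<in> {b. w \<in> connected_component_set {y \<in> X. f y \<le> b} v}"
    then have wb: "w \<in> connected_component_set {y \<in> X. f y \<le> b} v" by simp
    have "{y \<in> X. f y \<le> b} \<subseteq> {y \<in> X. g y \<le> b + M}"
    proof
      fix y assume "y \<in> {y \<in> X. f y \<le> b}"
      then show "y \<in> {y \<in> X. g y \<le> b + M}" using M[of y] by auto
    qed
    then have "w \<in> connected_component_set {y \<in> X. g y \<le> b + M} v"
      using connected_component_mono wb by blast
    then have "mheight X g v w \<le> b + M" by (rule mtree.mh_le[OF mg])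
    then show "mheight X g v w - M \<le> b" by simp
  qed
  then show ?thesis by simp
qed

theorem corollary1:
  fixes K :: "'a::euclidean_space set set"
    and f g :: "'a \<Rightarrow> real" and p :: "'a \<Rightarrow> real" and q :: real
  assumes "simplicial_complex K"
    and "connected (\<Union>K)"
    and "1 \<le> q"
    and "pl_extension K f" and "pl_extension K g"
    and "prob_dist (cplx_vertices K) p"
    and "balanced (cplx_vertices K) p"
  shows "gw_dist q (cplx_vertices K) p (sp_matrix (\<Union>K) f) (cplx_vertices K) p (sp_matrix (\<Union>K) g)
    \<le> (real (card (cplx_vertices K)) powr (2 / q) + 2) * Lq_norm q (cplx_vertices K) p (\<lambda>v. f v - g v)"
proof -
  note K = assms(1) and conn = assms(2) and q = assms(3) and plf = assms(4) and plg = assms(5)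
    and pd = assms(6) and bal = assms(7)
  define X where "X = \<Union>K"
  define V where "V = cplx_vertices K"
  have mf: "mtree X f" unfolding X_def
    using sc_compact[OF K] conn sc_cont[OF K plf] sc_comp_closed[OF K plf]
    by (simp add: mtree_def)
  have mg: "mtree X g" unfolding X_def
    using sc_compact[OF K] conn sc_cont[OF K plg] sc_comp_closed[OF K plg]
    by (simp add: mtree_def)
  have VX: "V \<subseteq> X" unfolding V_def X_def cplx_vertices_def by auto
  have finK: "finite K" using K unfolding simplicial_complex_def by simp
  have "(\<lambda>v. {v}) ` V \<subseteq> K" unfolding V_def cplx_vertices_def by auto
  then have "finite ((\<lambda>v. {v}) ` V)" using finK finite_subset by blast
  then have finV: "finite V" by (rule finite_imageD) (simp add: inj_on_def)
  have Vne: "V \<noteq> {}" using pd unfolding prob_dist_def V_def by auto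
  define h where "h = (\<lambda>v. f v - g v)"
  define M where "M = Max ((\<lambda>u. \<bar>h u\<bar>) ` V)"
  have "M \<in> (\<lambda>u. \<bar>h u\<bar>) ` V" unfolding M_def using finV Vne by (intro Max_in) auto
  then obtain u0 where u0: "u0 \<in> V" "\<bar>h u0\<bar> = M" by auto
  have hM: "\<bar>h u\<bar> \<le> M" if "u \<in> V" for u unfolding M_def using finV that by simp
  have XM: "\<bar>f x - g x\<bar> \<le> M" if "x \<in> X" for x
    using pl_vertex_bound[OF K plf plg, of M x] hM that unfolding X_def V_def h_def by blast
  have XM': "\<bar>g x - f x\<bar> \<le> M" if "x \<in> X" for x using XM[OF that] by simp
  have D: "\<bar>sp_matrix X f i k - sp_matrix X g i k\<bar> \<le> 2 * M + \<bar>h i\<bar> + \<bar>h k\<bar>"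
    if i: "i \<in> V" and k: "k \<in> V" for i k
  proof -
    have iX: "i \<in> X" and kX: "k \<in> X" using i k VX by auto
    have ef: "lca_matrix X f i k = mheight X f i k" by (rule mtree.lca_eq[OF mf iX kX])
    have eg: "lca_matrix X g i k = mheight X g i k" by (rule mtree.lca_eq[OF mg iX kX])
    have c1: "mheight X g i k \<le> mheight X f i k + M" by (rule mh_compare[OF mf mg iX kX XM])
    have c2: "mheight X f i k \<le> mheight X g i k + M" by (rule mh_compare[OF mg mf iX kX XM'])
    have "sp_matrix X f i k - sp_matrix X g i k
        = 2 * (mheight X f i k - mheight X g i k) - h i - h k"
      unfolding sp_matrix_def ef eg h_def by simp
    then show ?thesis using c1 c2 by (smt (verit))
  qed
  have "gw_dist q V p (sp_matrix X f) V p (sp_matrix X g) \<le> (real (card V) powr (2 / q) + 2) * Lq_norm q V p h"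
    by (rule gw_bound[where V=V and p=p and Da="sp_matrix X f" and Db="sp_matrix X g" and h=h and M=M and q=q and uz=u0,
          OF finV pd[folded V_def] bal[folded V_def] q hM u0 D])
  then show ?thesis unfolding X_def V_def h_def .
qed

end
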